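(* Let $V$ be a vector space of countably infinite dimension over a field $\mathbb{F}$, and let $u$ be an endomorphism of $V$ with no dominant eigenvalue such that $V^u$ is a torsion $\mathbb{F}[t]$-module. Then $V^u$ has a good stratification.
   Context: A scalar $\lambda$ is a dominant eigenvalue of $u$ if $\operatorname{rk}(u-\lambda\,\mathrm{id}_V)<\dim V$. $V^u$ is the $\mathbb{F}[t]$-module with underlying space $V$ and $t\cdot x:=u(x)$. A stratification of a non-zero $\mathbb{F}[t]$-module $M$ is an increasing family $(M_\alpha)_{\alpha\in D}$ of submodules indexed by a well-ordered set $D$ such that each quotient $M_\alpha/\sum_{\beta<\alpha}M_\beta$ is non-zero and monogenous (cyclic), and $M=\sum_{\alpha\in D}M_\alpha$; its dimension sequence is $n_\alpha:=\dim_{\mathbb{F}}(M_\alpha/\sum_{\beta<\alpha}M_\beta)\in\mathbb{N}^*\cup\{+\infty\}$. It is good if (a) $n_\alpha\ge 2$ whenever $\alpha$ is the minimum of $D$ or the successor of some element of $D$, and (b) $D$ has no maximum. *)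

theory Defs
  imports Main "HOL-Library.Countable_Set" "HOL-Computational_Algebra.Polynomial"
begin

text \<open>Throughout, the vector space V is the whole type 'b, with scalar
multiplication scale over the field 'a; u is an endomorphism of V.\<close>

definition poly_endo :: "('a::field \<Rightarrow> 'b::ab_group_add \<Rightarrow> 'b) \<Rightarrow> ('b \<Rightarrow> 'b) \<Rightarrow> 'a poly \<Rightarrow> 'b \<Rightarrow> 'b" where
  "poly_endo scale u p x = (\<Sum>i\<le>degree p. scale (coeff p i) ((u ^^ i) x))"

text \<open>Dominant eigenvalue: rk(u - c id) < dim V, ranks/dimensions being
cardinals (cardinalities of bases).\<close>
definition dominant_eigenvalue :: "('a::field \<Rightarrow> 'b::ab_group_add \<Rightarrow> 'b) \<Rightarrow> ('b \<Rightarrow> 'b) \<Rightarrow> 'a \<Rightarrow> bool" where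
  "dominant_eigenvalue scale u c \<longleftrightarrow>
     (\<exists>B C. \<not> module.dependent scale B
          \<and> module.span scale B = range (\<lambda>x. u x - scale c x)
          \<and> \<not> module.dependent scale C \<and> module.span scale C = UNIV
          \<and> (card_of B, card_of C) \<in> ordLess)"

text \<open>F[t]-submodules of V^u: u-stable linear subspaces.\<close>
definition fsubmodule :: "('a::field \<Rightarrow> 'b::ab_group_add \<Rightarrow> 'b) \<Rightarrow> ('b \<Rightarrow> 'b) \<Rightarrow> 'b set \<Rightarrow> bool" where
  "fsubmodule scale u S \<longleftrightarrow> module.subspace scale S \<and> u ` S \<subseteq> S"

text \<open>dim_F (M / N) \<ge> k  (k possibly reached only by an infinite dimension):
there are k elements of M linearly independent modulo N.\<close>
definition quot_dim_ge :: "('a::field \<Rightarrow> 'b::ab_group_add \<Rightarrow> 'b) \<Rightarrow> 'b set \<Rightarrow> 'b set \<Rightarrow> nat \<Rightarrow> bool" where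
  "quot_dim_ge scale M N k \<longleftrightarrow>
     (\<exists>S. S \<subseteq> M \<and> finite S \<and> card S = k \<and>
        (\<forall>c. (\<Sum>x\<in>S. scale (c x) x) \<in> N \<longrightarrow> (\<forall>x\<in>S. c x = 0)))"

text \<open>Index set D = Field r with well-order r; the strict order is r minus the diagonal.
below r M a = sum of the M b for b < a (the span of their union; {0} if there is none).\<close>
definition below :: "('a::field \<Rightarrow> 'b::ab_group_add \<Rightarrow> 'b) \<Rightarrow> 'i rel \<Rightarrow> ('i \<Rightarrow> 'b set) \<Rightarrow> 'i \<Rightarrow> 'b set" where
  "below scale r M a = module.span scale (\<Union>b\<in>{b. (b, a) \<in> r \<and> b \<noteq> a}. M b)"

definition stratification :: "('a::field \<Rightarrow> 'b::ab_group_add \<Rightarrow> 'b) \<Rightarrow> ('b \<Rightarrow> 'b) \<Rightarrow> 'i rel \<Rightarrow> ('i \<Rightarrow> 'b set) \<Rightarrow> bool" where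
  "stratification scale u r M \<longleftrightarrow>
     Well_order r
   \<and> (\<forall>a\<in>Field r. fsubmodule scale u (M a))
   \<and> (\<forall>a\<in>Field r. \<forall>b\<in>Field r. (b, a) \<in> r \<longrightarrow> M b \<subseteq> M a)
   \<and> (\<forall>a\<in>Field r. M a \<noteq> below scale r M a
        \<and> (\<exists>x\<in>M a. M a = {n + poly_endo scale u p x | n p. n \<in> below scale r M a}))
   \<and> module.span scale (\<Union>a\<in>Field r. M a) = UNIV"

definition is_min_idx :: "'i rel \<Rightarrow> 'i \<Rightarrow> bool" where
  "is_min_idx r a \<longleftrightarrow> a \<in> Field r \<and> (\<forall>b\<in>Field r. (a, b) \<in> r)"

definition is_succ_idx :: "'i rel \<Rightarrow> 'i \<Rightarrow> bool" where
  "is_succ_idx r a \<longleftrightarrow> a \<in> Field r \<and> (\<exists>b\<in>Field r. b \<noteq> a \<and> (b, a) \<in> r \<and>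
      \<not> (\<exists>c\<in>Field r. c \<noteq> a \<and> c \<noteq> b \<and> (b, c) \<in> r \<and> (c, a) \<in> r))"

definition good_stratification :: "('a::field \<Rightarrow> 'b::ab_group_add \<Rightarrow> 'b) \<Rightarrow> ('b \<Rightarrow> 'b) \<Rightarrow> 'i rel \<Rightarrow> ('i \<Rightarrow> 'b set) \<Rightarrow> bool" where
  "good_stratification scale u r M \<longleftrightarrow>
     stratification scale u r M
   \<and> (\<forall>a\<in>Field r. (is_min_idx r a \<or> is_succ_idx r a) \<longrightarrow> quot_dim_ge scale (M a) (below scale r M a) 2)
   \<and> \<not> (\<exists>a\<in>Field r. \<forall>b\<in>Field r. (b, a) \<in> r)"

end

theory Submission
  imports Defs "HOL-Library.Product_Lexorder"
begin

lemma wo_lemma: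
  fixes f :: "nat \<Rightarrow> 'c::wellorder"
  assumes "inj f"
  shows "Well_order {(m,n). f m \<le> f n}" and "Field {(m,n). f m \<le> f n} = UNIV"
proof -
  let ?r = "{(m,n). f m \<le> f n}"
  show F: "Field ?r = UNIV" unfolding Field_def by auto
  have "wf (?r - Id)"
  proof -
    have "?r - Id = inv_image {(x,y). x < y} f" using assms by (auto simp: inv_image_def inj_eq order.strict_iff_order dest: injD)
    then show ?thesis by (simp add: wf)
  qed
  moreover have "linear_order ?r"
    unfolding linear_order_on_def partial_order_on_def preorder_on_def refl_on_def trans_def antisym_def total_on_def F
    using assms by (auto simp: inj_eq dest: injD)
  ultimately show "Well_order ?r" unfolding well_order_on_def by (simp add: F)
qed


locale sctx = vector_space scale for scale :: "'a::field \<Rightarrow> 'b::ab_group_add \<Rightarrow> 'b" +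
  fixes u :: "'b \<Rightarrow> 'b"
  assumes lin: "Vector_Spaces.linear scale scale u"
begin

sublocale uL: Vector_Spaces.linear scale scale u by (rule lin)

abbreviation PE where "PE p x \<equiv> poly_endo scale u p x"

lemma pow_add: "(u^^i) (x + y) = (u^^i) x + (u^^i) y"
  by (induction i) (auto simp: uL.add)
lemma pow_scale: "(u^^i) (scale c x) = scale c ((u^^i) x)"
  by (induction i) (auto simp: uL.scale)
lemma pow_zero: "(u^^i) 0 = 0"
  by (induction i) (auto simp: uL.zero)
lemma pow_sum: "(u^^i) (sum f A) = (\<Sum>a\<in>A. (u^^i) (f a))"
  by (induction A rule: infinite_finite_induct) (auto simp: pow_zero pow_add)

lemma PE_ext: "degree p \<le> n \<Longrightarrow> PE p x = (\<Sum>i\<le>n. scale (coeff p i) ((u^^i) x))"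
proof -
  assume "degree p \<le> n"
  then have "(\<Sum>i\<le>n. scale (coeff p i) ((u^^i) x)) = (\<Sum>i\<le>degree p. scale (coeff p i) ((u^^i) x))"
    by (intro sum.mono_neutral_right) (auto simp: coeff_eq_0)
  then show ?thesis by (simp add: poly_endo_def)
qed

lemma PE_0[simp]: "PE 0 x = 0" by (simp add: poly_endo_def)

lemma PE_add: "PE (p + q) x = PE p x + PE q x"
proof -
  let ?n = "max (degree p) (degree q)"
  have "degree (p+q) \<le> ?n" by (rule degree_add_le) auto
  then show ?thesis
    by (simp add: PE_ext[of p ?n] PE_ext[of q ?n] PE_ext[of "p+q" ?n] scale_left_distrib sum.distrib)
qed

lemma PE_smult: "PE (smult c p) x = scale c (PE p x)"
proof -
  have "degree (smult c p) \<le> degree p" by simp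
  then show ?thesis
    by (simp add: PE_ext[of "smult c p" "degree p"] PE_ext[of p "degree p"] scale_sum_right)
qed

lemma PE_xadd: "PE p (x + y) = PE p x + PE p y"
  by (simp add: poly_endo_def pow_add scale_right_distrib sum.distrib)

lemma PE_xscale: "PE p (scale c x) = scale c (PE p x)"
  by (simp add: poly_endo_def pow_scale scale_sum_right mult.commute)

lemma PE_xzero[simp]: "PE p 0 = 0"
  by (simp add: poly_endo_def pow_zero)

lemma PE_xsum: "PE p (sum f A) = (\<Sum>a\<in>A. PE p (f a))"
  by (induction A rule: infinite_finite_induct) (auto simp: PE_xadd)

lemma PE_xdiff: "PE p (x - y) = PE p x - PE p y"
  by (metis PE_xadd add_diff_cancel diff_add_cancel)

lemma PE_pCons: "PE (pCons a p) x = scale a x + u (PE p x)"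
proof -
  let ?n = "Suc (degree p)"
  have d: "degree (pCons a p) \<le> ?n" by (simp add: degree_pCons_le)
  have "PE (pCons a p) x = (\<Sum>i\<le>?n. scale (coeff (pCons a p) i) ((u^^i) x))" by (rule PE_ext[OF d])
  also have "\<dots> = scale a x + (\<Sum>i\<le>degree p. scale (coeff p i) ((u^^Suc i) x))"
    by (subst sum.atMost_Suc_shift) simp
  also have "(\<Sum>i\<le>degree p. scale (coeff p i) ((u^^Suc i) x)) = u (PE p x)"
    by (simp add: poly_endo_def uL.sum uL.scale)
  finally show ?thesis .
qed

lemma PE_const[simp]: "PE [:c:] x = scale c x"
  using PE_pCons[of c 0 x] by (simp add: uL.zero)

lemma PE_one[simp]: "PE 1 x = x"
  using PE_const[of 1 x] by (simp add: one_pCons)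

lemma PE_linear_poly: "PE [:c, 1:] x = scale c x + u x"
  using PE_pCons[of c "[:1:]" x] by simp

lemma PE_u: "PE p (u x) = u (PE p x)"
  by (simp add: poly_endo_def uL.sum uL.scale funpow_swap1)

lemma PE_mult: "PE (p * q) x = PE p (PE q x)"
proof (induction p)
  case 0 then show ?case by simp
next
  case (pCons a p)
  have "PE (pCons a p * q) x = PE (smult a q + pCons 0 (p * q)) x" by simp
  also have "\<dots> = scale a (PE q x) + u (PE p (PE q x))"
    by (simp add: PE_add PE_smult PE_pCons pCons.IH)
  also have "\<dots> = PE (pCons a p) (PE q x)" by (simp add: PE_pCons)
  finally show ?case .
qed

lemma PE_comm: "PE p (PE q x) = PE q (PE p x)"
  by (metis PE_mult mult.commute)


definition Tl where "Tl c x = u x - scale c x"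
definition cyc where "cyc x = range (\<lambda>p. PE p x)"
definition gen where "gen S = span (\<Union>x\<in>S. cyc x)"
definition stable where "stable W \<longleftrightarrow> subspace W \<and> u ` W \<subseteq> W"

lemma PE_Tl: "PE [:-c, 1:] x = Tl c x"
  using PE_linear_poly[of "-c" x] by (simp add: Tl_def)

lemma Tl_add: "Tl c (x + y) = Tl c x + Tl c y"
  by (simp add: Tl_def uL.add scale_right_distrib algebra_simps)
lemma Tl_scale: "Tl c (scale a x) = scale a (Tl c x)"
  by (simp add: Tl_def uL.scale scale_right_diff_distrib scale_left_commute)

lemma stable_pow: "stable W \<Longrightarrow> x \<in> W \<Longrightarrow> (u^^i) x \<in> W"
  by (induction i) (auto simp: stable_def)

lemma PE_in: "stable W \<Longrightarrow> x \<in> W \<Longrightarrow> PE p x \<in> W"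
  unfolding poly_endo_def
  by (rule subspace_sum) (auto simp: stable_def intro!: subspace_scale stable_pow)

lemma Tl_in: "stable W \<Longrightarrow> x \<in> W \<Longrightarrow> Tl c x \<in> W"
  using PE_in[of W x "[:-c,1:]"] by (simp add: PE_Tl)

lemma cyc_subspace: "subspace (cyc x)"
  unfolding subspace_def cyc_def
proof (intro conjI ballI allI)
  show "0 \<in> range (\<lambda>p. PE p x)" by (rule range_eqI[of _ _ 0]) simp
next
  fix a b assume "a \<in> range (\<lambda>p. PE p x)" "b \<in> range (\<lambda>p. PE p x)"
  then obtain p q where "a = PE p x" "b = PE q x" by auto
  then show "a + b \<in> range (\<lambda>p. PE p x)" by (auto intro: range_eqI[of _ _ "p+q"] simp: PE_add)
next
  fix c a assume "a \<in> range (\<lambda>p. PE p x)"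
  then obtain p where "a = PE p x" by auto
  then show "scale c a \<in> range (\<lambda>p. PE p x)" by (auto intro: range_eqI[of _ _ "smult c p"] simp: PE_smult)
qed

lemma cyc_stable: "stable (cyc x)"
  unfolding stable_def
proof (intro conjI cyc_subspace)
  show "u ` cyc x \<subseteq> cyc x"
  proof
    fix y assume "y \<in> u ` cyc x"
    then obtain p where "y = u (PE p x)" by (auto simp: cyc_def)
    then have "y = PE (pCons 0 p) x" by (simp add: PE_pCons)
    then show "y \<in> cyc x" by (auto simp: cyc_def)
  qed
qed

lemma in_cyc: "x \<in> cyc x"
  unfolding cyc_def by (rule range_eqI[of _ _ 1]) simp

lemma PE_in_cyc: "PE p x \<in> cyc x"
  unfolding cyc_def by simp

lemma cyc_min: "stable W \<Longrightarrow> x \<in> W \<Longrightarrow> cyc x \<subseteq> W"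
  unfolding cyc_def by (auto intro: PE_in)

lemma stable_span_union: "(\<And>A. A \<in> F \<Longrightarrow> stable A) \<Longrightarrow> stable (span (\<Union>F))"
proof -
  assume h: "\<And>A. A \<in> F \<Longrightarrow> stable A"
  have "u ` span (\<Union>F) = span (u ` \<Union>F)" by (simp add: uL.span_image)
  also have "\<dots> \<subseteq> span (\<Union>F)" using h by (intro span_mono) (auto simp: stable_def)
  finally show ?thesis by (simp add: stable_def)
qed

lemma gen_stable: "stable (gen S)"
  unfolding gen_def by (rule stable_span_union) (auto simp: cyc_stable)

lemma gen_sup: "S \<subseteq> gen S"
  unfolding gen_def using in_cyc by (auto intro!: span_base)

lemma gen_min: assumes "S \<subseteq> W" "stable W" shows "gen S \<subseteq> W"
  unfolding gen_def
proof (rule span_minimal)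
  show "(\<Union>x\<in>S. cyc x) \<subseteq> W" using cyc_min[OF assms(2)] assms(1) by blast
  show "subspace W" using assms(2) by (simp add: stable_def)
qed

lemma gen_mono: "S \<subseteq> S' \<Longrightarrow> gen S \<subseteq> gen S'"
  unfolding gen_def by (rule span_mono) auto

lemma gen_subspace: "subspace (gen S)"
  using gen_stable stable_def by blast

lemma gen_insert: "gen (insert x A) = {n + PE p x | n p. n \<in> gen A}"
proof -
  have "gen (insert x A) = span (cyc x \<union> (\<Union>y\<in>A. cyc y))" by (simp add: gen_def)
  also have "\<dots> = {a + b | a b. a \<in> span (cyc x) \<and> b \<in> gen A}" by (simp add: span_Un gen_def)
  also have "span (cyc x) = cyc x" using cyc_subspace by simp
  finally show ?thesis apply (auto simp: cyc_def)
    apply (metis add.commute)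
    by (metis add.commute rangeI)
qed

lemma PE_eval: assumes "stable M" "Tl c e \<in> M"
  shows "PE p e - scale (poly p c) e \<in> M"
proof -
  have "PE p e = PE ([:-c, 1:] * synthetic_div p c + [:poly p c:]) e"
    by (simp only: synthetic_div_correct')
  also have "\<dots> = PE (synthetic_div p c) (Tl c e) + scale (poly p c) e"
    by (simp only: PE_add mult.commute[of "[:-c,1:]"] PE_mult PE_Tl PE_const)
  finally show ?thesis using PE_in[OF assms] by simp
qed


end

context sctx begin
definition ind2 where "ind2 N x \<longleftrightarrow> (\<forall>a b. scale a x + scale b (u x) \<in> N \<longrightarrow> a = 0 \<and> b = 0)"

lemma ind2D: "ind2 N x \<Longrightarrow> scale a x + scale b (u x) \<in> N \<Longrightarrow> a = 0 \<and> b = 0"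
  unfolding ind2_def by blast

lemma ind2_quot_dim:
  assumes "ind2 N x" "subspace N" "x \<in> M" "u x \<in> M"
  shows "quot_dim_ge scale M N 2"
proof -
  have ne: "x \<noteq> u x"
  proof
    assume "x = u x"
    then have "scale 1 x + scale (-1) (u x) \<in> N" using subspace_0[OF assms(2)] by simp
    from ind2D[OF assms(1) this] show False by simp
  qed
  show ?thesis unfolding quot_dim_ge_def
  proof (intro exI[of _ "{x, u x}"] conjI allI impI ballI)
    show "{x, u x} \<subseteq> M" using assms by auto
    show "card {x, u x} = 2" using ne by simp
    fix c y assume s: "(\<Sum>y\<in>{x, u x}. scale (c y) y) \<in> N" and y: "y \<in> {x, u x}"
    from s ne have "scale (c x) x + scale (c (u x)) (u x) \<in> N" by simp
    from ind2D[OF assms(1) this] y show "c y = 0" by auto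
  qed simp
qed
end

context sctx begin
lemma good_from_gens:
  fixes f :: "nat \<Rightarrow> 'c::wellorder" and g :: "nat \<Rightarrow> 'b"
  assumes inj: "inj f"
    and nomax: "\<And>a. \<exists>b. f a < f b"
    and G1: "\<And>a. g a \<notin> gen (g ` {b. f b < f a})"
    and G2: "\<And>a. is_min_idx {(m,n). f m \<le> f n} a \<or> is_succ_idx {(m,n). f m \<le> f n} a
               \<Longrightarrow> ind2 (gen (g ` {b. f b < f a})) (g a)"
    and G3: "span (\<Union>a. gen (g ` {b. f b \<le> f a})) = UNIV"
  shows "good_stratification scale u {(m,n). f m \<le> f n} (\<lambda>a. gen (g ` {b. f b \<le> f a}))"
proof -
  define r where "r = {(m,n). f m \<le> f n}"
  define M where "M = (\<lambda>a. gen (g ` {b. f b \<le> f a}))"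
  have WO: "Well_order r" and F: "Field r = UNIV" unfolding r_def
    using inj by (rule wo_lemma)+
  have lt: "{b. (b, a) \<in> r \<and> b \<noteq> a} = {b. f b < f a}" for a
    using inj by (auto simp: r_def order.strict_iff_order inj_eq)
  have below: "below scale r M a = gen (g ` {b. f b < f a})" for a
  proof
    show "below scale r M a \<subseteq> gen (g ` {b. f b < f a})"
      unfolding below_def lt M_def
    proof (rule span_minimal)
      show "(\<Union>b\<in>{b. f b < f a}. gen (g ` {c. f c \<le> f b})) \<subseteq> gen (g ` {b. f b < f a})"
      proof (rule UN_least)
        fix b assume "b \<in> {b. f b < f a}"
        then have "g ` {c. f c \<le> f b} \<subseteq> g ` {b. f b < f a}" by auto
        then show "gen (g ` {c. f c \<le> f b}) \<subseteq> gen (g ` {b. f b < f a})" by (rule gen_mono)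
      qed
    qed (rule gen_subspace)
    show "gen (g ` {b. f b < f a}) \<subseteq> below scale r M a"
      unfolding below_def lt
    proof (rule gen_min)
      show "stable (span (\<Union>b\<in>{b. f b < f a}. M b))"
        by (rule stable_span_union) (auto simp: M_def intro: gen_stable)
      show "g ` {b. f b < f a} \<subseteq> span (\<Union>b\<in>{b. f b < f a}. M b)"
      proof
        fix y assume "y \<in> g ` {b. f b < f a}"
        then obtain b where b: "f b < f a" "y = g b" by auto
        have "y \<in> M b" unfolding M_def using b gen_sup[of "g ` {c. f c \<le> f b}"] by auto
        then show "y \<in> span (\<Union>b\<in>{b. f b < f a}. M b)" using b by (intro span_base) blast
      qed
    qed
  qed
  have ins: "g ` {b. f b \<le> f a} = insert (g a) (g ` {b. f b < f a})" for a
  proof -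
    have "{b. f b \<le> f a} = insert a {b. f b < f a}" using inj by (auto simp: le_less inj_eq)
    then show ?thesis by simp
  qed
  have gaM: "g a \<in> M a" for a unfolding M_def using gen_sup[of "g ` {b. f b \<le> f a}"] by auto
  have strat: "stratification scale u r M"
    unfolding stratification_def
  proof (intro conjI ballI impI WO)
    fix a show "fsubmodule scale u (M a)"
      using gen_stable[of "g ` {b. f b \<le> f a}"] unfolding fsubmodule_def M_def stable_def by simp
  next
    fix a b assume "(b, a) \<in> r" then show "M b \<subseteq> M a"
      unfolding M_def r_def by (auto intro!: gen_mono)
  next
    fix a
    show "M a \<noteq> below scale r M a"
      unfolding below using gaM[of a] G1[of a] by auto
    show "\<exists>x\<in>M a. M a = {n + poly_endo scale u p x |n p. n \<in> below scale r M a}"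
    proof (rule bexI[OF _ gaM])
      show "M a = {n + poly_endo scale u p (g a) |n p. n \<in> below scale r M a}"
        unfolding below by (simp only: M_def ins gen_insert)
    qed
  next
    show "span (\<Union>a\<in>Field r. M a) = UNIV" using G3 by (simp add: F M_def)
  qed
  have good: "quot_dim_ge scale (M a) (below scale r M a) 2"
    if "is_min_idx r a \<or> is_succ_idx r a" for a
  proof (rule ind2_quot_dim)
    show "ind2 (below scale r M a) (g a)" unfolding below using G2[of a] that unfolding r_def by simp
    show "subspace (below scale r M a)" unfolding below by (rule gen_subspace)
    show ga: "g a \<in> M a" unfolding M_def using gen_sup[of "g ` {b. f b \<le> f a}"] by auto
    then show "u (g a) \<in> M a" using gen_stable[of "g ` {b. f b \<le> f a}"] unfolding M_def stable_def by auto
  qed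
  have nm: "\<not> (\<exists>a\<in>Field r. \<forall>b\<in>Field r. (b, a) \<in> r)"
  proof
    assume "\<exists>a\<in>Field r. \<forall>b\<in>Field r. (b, a) \<in> r"
    then obtain a where a: "\<forall>b. f b \<le> f a" unfolding F by (auto simp: r_def)
    obtain b where "f a < f b" using nomax by blast
    with a[rule_format, of b] show False by simp
  qed
  show ?thesis
    using strat good nm unfolding good_stratification_def r_def[symmetric] M_def[symmetric] by blast
qed

end

context sctx begin

lemma torsion_cyc:
  assumes p: "p \<noteq> 0" "PE p x = 0"
  shows "\<exists>F. finite F \<and> cyc x \<subseteq> span F"
proof (cases "degree p = 0")
  case True
  then obtain c where c: "p = [:c:]" by (metis degree_eq_zeroE)
  with p have "c \<noteq> 0" by auto
  with p c have x0: "x = 0" by simp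
  have "cyc x \<subseteq> span {}" unfolding x0 cyc_def by auto
  then show ?thesis by blast
next
  case False
  define d where "d = degree p"
  define S where "S = (\<lambda>i. (u^^i) x) ` {..<d}"
  have lc: "coeff p d \<noteq> 0" using p(1) d_def by simp
  have "0 = PE p x" using p by simp
  also have "\<dots> = (\<Sum>i<d. scale (coeff p i) ((u^^i) x)) + scale (coeff p d) ((u^^d) x)"
    unfolding poly_endo_def d_def[symmetric] lessThan_Suc_atMost[symmetric] by simp
  finally have "scale (coeff p d) ((u^^d) x) = - (\<Sum>i<d. scale (coeff p i) ((u^^i) x))"
    by (simp add: eq_neg_iff_add_eq_0 add.commute)
  then have eq: "(u^^d) x = scale (inverse (coeff p d)) (- (\<Sum>i<d. scale (coeff p i) ((u^^i) x)))"
    using lc by (metis scale_left_imp_eq scale_scale right_inverse scale_one)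
  have mem: "- (\<Sum>i<d. scale (coeff p i) ((u^^i) x)) \<in> span S"
    unfolding S_def by (intro span_neg span_sum span_scale span_base) auto
  have ud: "(u^^d) x \<in> span S" unfolding eq by (rule span_scale[OF mem])
  have uS: "u ` S \<subseteq> span S"
  proof
    fix y assume "y \<in> u ` S"
    then obtain i where i: "i < d" "y = (u^^Suc i) x" unfolding S_def by auto
    show "y \<in> span S"
    proof (cases "Suc i < d")
      case True
      have "y \<in> S" unfolding S_def using i True by (intro image_eqI[of _ _ "Suc i"]) auto
      then show ?thesis by (rule span_base)
    next
      case False then have "Suc i = d" using i by simp
      then show ?thesis using i ud by simp
    qed
  qed
  have st: "stable (span S)" unfolding stable_def
    using uL.span_image[of S] span_mono[OF uS] by (simp add: span_span)
  have "x \<in> span S" using False unfolding S_def d_def by (intro span_base) (auto intro: image_eqI[of _ _ 0])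
  then have "cyc x \<subseteq> span S" by (rule cyc_min[OF st])
  moreover have "finite S" unfolding S_def by simp
  ultimately show ?thesis by blast
qed

lemma gen_fin:
  assumes "finite S" "\<And>x. x \<in> S \<Longrightarrow> \<exists>F. finite F \<and> cyc x \<subseteq> span F"
  shows "\<exists>F. finite F \<and> gen S \<subseteq> span F"
proof -
  obtain Fx where Fx: "\<And>x. x \<in> S \<Longrightarrow> finite (Fx x) \<and> cyc x \<subseteq> span (Fx x)" using assms(2) by metis
  have "gen S \<subseteq> span (\<Union>x\<in>S. Fx x)" unfolding gen_def
  proof (rule span_minimal)
    show "(\<Union>x\<in>S. cyc x) \<subseteq> span (\<Union>x\<in>S. Fx x)"
      using Fx span_mono[of "Fx _" "\<Union>x\<in>S. Fx x"] by blast
  qed simp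
  moreover have "finite (\<Union>x\<in>S. Fx x)" using Fx assms(1) by auto
  ultimately show ?thesis by blast
qed

lemma indep_fin:
  assumes "independent C" "C \<subseteq> span F" "finite F" shows "finite C"
  using independent_span_bound[OF assms(3,1,2)] by simp

lemma no_dom_inf:
  assumes C: "independent C" "infinite C"
    and nd: "\<not> dominant_eigenvalue scale u c" and spC: "span C = UNIV"
    and F: "finite F" "range (Tl c) \<subseteq> span F"
  shows False
proof -
  have sub: "subspace (range (Tl c))"
  proof -
    have "range (Tl c) = (\<lambda>x. u x - scale c x) ` UNIV" by (simp add: Tl_def)
    moreover have "Vector_Spaces.linear scale scale (\<lambda>x. u x - scale c x)"
      using lin by (simp add: Vector_Spaces.linear_iff uL.add uL.scale algebra_simps scale_right_diff_distrib scale_left_commute)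
    then interpret TL: Vector_Spaces.linear scale scale "\<lambda>x. u x - scale c x" .
    have "subspace ((\<lambda>x. u x - scale c x) ` UNIV)" by (rule TL.subspace_image) simp
    ultimately show ?thesis by simp
  qed
  obtain B where B: "B \<subseteq> range (Tl c)" "independent B" "range (Tl c) \<subseteq> span B"
    using maximal_independent_subset[of "range (Tl c)"] by blast
  have spB: "span B = range (Tl c)"
    using B sub span_minimal[of B "range (Tl c)"] span_superset[of B] by blast
  have "finite B" using indep_fin[OF B(2) _ F(1)] B(1) F(2) by blast
  then have "(card_of B, card_of C) \<in> ordLess"
    using finite_ordLess_infinite[OF card_of_Well_order card_of_Well_order] C(2) by (simp add: Field_card_of)
  then have "dominant_eigenvalue scale u c"
    unfolding dominant_eigenvalue_def using B(2) spB C(1) spC by (auto simp: Tl_def)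
  with nd show False by simp
qed

end


locale sctx2 = sctx +
  fixes C
  assumes C_ind: "independent C" and C_span: "span C = UNIV" and C_inf: "infinite C"
    and C_count: "countable C"
    and nodom: "\<forall>c. \<not> dominant_eigenvalue scale u c"
    and tors: "\<forall>x. \<exists>p. p \<noteq> 0 \<and> PE p x = 0"
begin

lemma cyc_finsp: "\<exists>F. finite F \<and> cyc x \<subseteq> span F"
proof -
  obtain p where "p \<noteq> 0" "PE p x = 0" using tors by blast
  then show ?thesis by (rule torsion_cyc)
qed

lemma gen_finsp: "finite G \<Longrightarrow> \<exists>F. finite F \<and> gen G \<subseteq> span F"
  by (rule gen_fin) (assumption, rule cyc_finsp)

lemma not_UNIV: "finite F \<Longrightarrow> \<not> UNIV \<subseteq> span F"
proof
  assume "finite F" "UNIV \<subseteq> span F"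
  then have "finite C" using indep_fin[OF C_ind, of F] by blast
  with C_inf show False by simp
qed

lemma exists_out: "finite G \<Longrightarrow> \<exists>e. e \<notin> gen G"
proof (rule ccontr)
  assume "finite G" "\<nexists>e. e \<notin> gen G"
  then have "UNIV \<subseteq> gen G" by blast
  moreover obtain F where "finite F" "gen G \<subseteq> span F" using gen_finsp[OF \<open>finite G\<close>] by blast
  ultimately show False using not_UNIV by blast
qed

lemma rank_inf: "finite F \<Longrightarrow> \<not> range (Tl c) \<subseteq> span F"
proof
  assume "finite F" "range (Tl c) \<subseteq> span F"
  moreover have "\<not> dominant_eigenvalue scale u c" using nodom by blast
  ultimately show False using no_dom_inf[OF C_ind C_inf _ C_span] by blast
qed

end

context sctx begin

lemma PE_lin2: "PE [:a, b:] w = scale a w + scale b (u w)"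
  using PE_pCons[of a "[:b:]" w] by (simp add: uL.scale)

lemma PE_diff: "PE (p - q) x = PE p x - PE q x"
  by (metis PE_add add_diff_cancel diff_add_cancel)

lemma u_Tl: "u w = Tl c w + scale c w"
  by (simp add: Tl_def)

lemma subspace_inv_scale: "subspace M \<Longrightarrow> a \<noteq> 0 \<Longrightarrow> scale a x \<in> M \<Longrightarrow> x \<in> M"
proof -
  assume h: "subspace M" "a \<noteq> 0" "scale a x \<in> M"
  have "x = scale (inverse a) (scale a x)" using h(2) by simp
  then show "x \<in> M" using subspace_scale[OF h(1) h(3)] by metis
qed

lemma ind2_notin: "ind2 N x \<Longrightarrow> subspace N \<Longrightarrow> x \<notin> N"
proof
  assume "ind2 N x" "subspace N" "x \<in> N"
  then have "scale 1 x + scale 0 (u x) \<in> N" by simp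
  from ind2D[OF \<open>ind2 N x\<close> this] show False by simp
qed

lemma ind2I_Tl:
  assumes "\<And>g b. scale g x + scale b (Tl c x) \<in> N \<Longrightarrow> g = 0 \<and> b = 0"
  shows "ind2 N x"
  unfolding ind2_def
proof (intro allI impI)
  fix a b assume "scale a x + scale b (u x) \<in> N"
  moreover have "scale (a + b * c) x + scale b (Tl c x) = scale a x + scale b (u x)"
    by (simp add: Tl_def scale_right_diff_distrib scale_left_distrib)
  ultimately have "scale (a + b * c) x + scale b (Tl c x) \<in> N" by simp
  from assms[OF this] show "a = 0 \<and> b = 0" by auto
qed

lemma gen_insert_mem: "n \<in> gen G \<Longrightarrow> n + PE p x \<in> gen (insert x G)"
  unfolding gen_insert by blast

end


context sctx begin

lemma PE_neg: "PE (- p) x = - PE p x"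
  using PE_diff[of 0 p x] by simp

lemma PE_Tl_comm: "PE p (Tl c y) = Tl c (PE p y)"
  by (metis PE_Tl PE_comm)

lemma Hlin:
  assumes H: "\<forall>y p. PE p y \<in> M \<longrightarrow> poly p c \<noteq> 0 \<longrightarrow> y \<in> M"
    and w: "scale g w + scale b (Tl c w) \<in> M" and g: "g \<noteq> 0"
  shows "w \<in> M"
proof -
  have "PE [:g - b * c, b:] w = scale g w + scale b (Tl c w)"
    by (simp add: PE_lin2 Tl_def scale_right_diff_distrib scale_left_diff_distrib)
  moreover have "poly [:g - b * c, b:] c = g" by (simp add: algebra_simps)
  ultimately show ?thesis using H w g by metis
qed

end

context sctx2 begin

lemma stepA1:
  assumes G: "finite G" and e: "e \<notin> gen G"
    and caseA: "\<And>c F. finite F \<Longrightarrow> \<not> range (\<lambda>x. Tl c (Tl c x)) \<subseteq> span F"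
  shows "(\<exists>x. ind2 (gen G) x \<and> e \<in> gen (insert x G)) \<or>
         (\<exists>x1 x2. ind2 (gen G) x1 \<and> ind2 (gen (insert x1 G)) x2 \<and> e \<in> gen (insert x2 (insert x1 G)))"
proof -
  define M where "M = gen G"
  have stM: "stable M" unfolding M_def by (rule gen_stable)
  then have subM: "subspace M" by (simp add: stable_def)
  note eM = e[folded M_def]
  show ?thesis
  proof (cases "ind2 M e")
    case True
    have "e \<in> gen (insert e G)" by (rule subsetD[OF gen_sup]) simp
    with True show ?thesis unfolding M_def by blast
  next
    case False
    then obtain a b where ab: "scale a e + scale b (u e) \<in> M" "\<not> (a = 0 \<and> b = 0)"
      unfolding ind2_def by blast
    have b: "b \<noteq> 0"
    proof
      assume "b = 0"
      with ab have "scale a e \<in> M" "a \<noteq> 0" by auto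
      with subspace_inv_scale[OF subM, of a e] eM show False by simp
    qed
    define c where "c = - a / b"
    have ib: "inverse b * a = - c" "inverse b * b = 1" using b by (simp_all add: c_def divide_inverse mult.commute)
    have "Tl c e = scale (inverse b) (scale a e + scale b (u e))"
      by (simp add: Tl_def scale_right_distrib scale_scale ib)
    then have Te: "Tl c e \<in> M" using subspace_scale[OF subM ab(1)] by simp
    show ?thesis
    proof (cases "\<exists>y p. y \<notin> M \<and> PE p y \<in> M \<and> poly p c \<noteq> 0")
      case True
      then obtain y p where y: "y \<notin> M" "PE p y \<in> M" "poly p c \<noteq> 0" by blast
      define x where "x = e + y"
      have "ind2 M x"
      proof (rule ind2I_Tl[of _ c])
        fix g \<beta> assume h: "scale g x + scale \<beta> (Tl c x) \<in> M"
        have "scale g x + scale \<beta> (Tl c x) - scale \<beta> (Tl c e) \<in> M"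
          by (rule subspace_diff[OF subM h subspace_scale[OF subM Te]])
        moreover have "scale g x + scale \<beta> (Tl c x) - scale \<beta> (Tl c e)
                       = scale g e + (scale g y + scale \<beta> (Tl c y))"
          by (simp add: x_def Tl_add scale_right_distrib)
        ultimately have w: "scale g e + (scale g y + scale \<beta> (Tl c y)) \<in> M" by simp
        have "PE p (scale g e + (scale g y + scale \<beta> (Tl c y)))
              = scale g (PE p e) + (scale g (PE p y) + scale \<beta> (Tl c (PE p y)))"
          by (simp add: PE_xadd PE_xscale PE_Tl_comm)
        moreover have "PE p (scale g e + (scale g y + scale \<beta> (Tl c y))) \<in> M"
          by (rule PE_in[OF stM w])
        moreover have "scale g (PE p y) + scale \<beta> (Tl c (PE p y)) \<in> M"
          using subM stM y(2) by (intro subspace_add subspace_scale Tl_in) auto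
        ultimately have A: "scale g (PE p e) + (scale g (PE p y) + scale \<beta> (Tl c (PE p y))) \<in> M"
          and B: "scale g (PE p y) + scale \<beta> (Tl c (PE p y)) \<in> M" by simp_all
        from subspace_diff[OF subM A B] have "scale g (PE p e) \<in> M" by simp
        moreover have "scale g (PE p e - scale (poly p c) e) \<in> M"
          by (rule subspace_scale[OF subM PE_eval[OF stM Te]])
        ultimately have "scale g (PE p e) - scale g (PE p e - scale (poly p c) e) \<in> M"
          by (rule subspace_diff[OF subM])
        then have "scale (g * poly p c) e \<in> M" by (simp add: scale_right_diff_distrib scale_scale)
        then have g0: "g = 0"
        proof (rule contrapos_pp)
          assume "g \<noteq> 0"
          then have "g * poly p c \<noteq> 0" using y(3) by simp
          then show "scale (g * poly p c) e \<notin> M" using subspace_inv_scale[OF subM, of "g * poly p c" e] eM by blast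
        qed
        with w have "scale \<beta> (Tl c y) \<in> M" by simp
        have "\<beta> = 0"
        proof (rule ccontr)
          assume "\<beta> \<noteq> 0"
          with \<open>scale \<beta> (Tl c y) \<in> M\<close> have Ty: "Tl c y \<in> M" using subspace_inv_scale[OF subM] by blast
          have "PE p y - (PE p y - scale (poly p c) y) \<in> M"
            by (rule subspace_diff[OF subM y(2) PE_eval[OF stM Ty]])
          then have "scale (poly p c) y \<in> M" by simp
          with y subspace_inv_scale[OF subM] show False by blast
        qed
        with g0 show "g = 0 \<and> \<beta> = 0" by simp
      qed
      moreover have "e \<in> gen (insert x G)"
      proof -
        define m1 where "m1 = PE p e - scale (poly p c) e"
        have m1: "m1 \<in> M" unfolding m1_def by (rule PE_eval[OF stM Te])
        define n where "n = - scale (inverse (poly p c)) (m1 + PE p y)"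
        have n: "n \<in> gen G" unfolding n_def M_def[symmetric]
          using subM m1 y(2) by (intro subspace_neg subspace_scale subspace_add) auto
        have "n + PE (smult (inverse (poly p c)) p) x = e"
          using y(3) by (simp add: n_def x_def PE_smult PE_xadd m1_def scale_right_distrib scale_right_diff_distrib scale_scale)
        then show ?thesis using gen_insert_mem[OF n] by metis
      qed
      ultimately show ?thesis unfolding M_def by blast
    next
      case False
      then have H0: "\<forall>y p. PE p y \<in> M \<longrightarrow> poly p c \<noteq> 0 \<longrightarrow> y \<in> M" by blast
      then have H: "\<And>y p. PE p y \<in> M \<Longrightarrow> poly p c \<noteq> 0 \<Longrightarrow> y \<in> M" by blast
      obtain F where F: "finite F" "M \<subseteq> span F" using gen_finsp[OF G] unfolding M_def by blast
      obtain z where z: "Tl c (Tl c z) \<notin> span F" using caseA[OF F(1), of c] by blast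
      then have TTz: "Tl c (Tl c z) \<notin> M" using F by blast
      have Tz: "Tl c z \<notin> M" using TTz Tl_in[OF stM] by blast
      have zM: "z \<notin> M" using Tz Tl_in[OF stM] by blast
      show ?thesis
      proof (cases "e \<in> gen (insert z G)")
        case True
        have "ind2 M z"
        proof (rule ind2I_Tl[of _ c])
          fix g \<beta> assume h: "scale g z + scale \<beta> (Tl c z) \<in> M"
          have g0: "g = 0" using Hlin[OF H0 h] zM by blast
          with h have "scale \<beta> (Tl c z) \<in> M" by simp
          then have "\<beta> = 0" using subspace_inv_scale[OF subM] Tz by blast
          with g0 show "g = 0 \<and> \<beta> = 0" by simp
        qed
        with True show ?thesis unfolding M_def by blast
      next
        case False
        define Mz where "Mz = gen (insert z G)"
        have stMz: "stable Mz" unfolding Mz_def by (rule gen_stable)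
        then have subMz: "subspace Mz" by (simp add: stable_def)
        have MMz: "M \<subseteq> Mz" unfolding M_def Mz_def by (rule gen_mono) auto
        have zMz: "z \<in> Mz" unfolding Mz_def using gen_sup by blast
        have TzMz: "Tl c z \<in> Mz" by (rule Tl_in[OF stMz zMz])
        have TTzMz: "Tl c (Tl c z) \<in> Mz" by (rule Tl_in[OF stMz TzMz])
        note eMz = False[folded Mz_def]
        define x1 where "x1 = e + Tl c z"
        have i1: "ind2 M x1"
        proof (rule ind2I_Tl[of _ c])
          fix g \<beta> assume h: "scale g x1 + scale \<beta> (Tl c x1) \<in> M"
          have "scale g x1 + scale \<beta> (Tl c x1) - scale \<beta> (Tl c e) \<in> M"
            by (rule subspace_diff[OF subM h subspace_scale[OF subM Te]])
          moreover have "scale g x1 + scale \<beta> (Tl c x1) - scale \<beta> (Tl c e)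
                         = scale g e + (scale g (Tl c z) + scale \<beta> (Tl c (Tl c z)))"
            by (simp add: x1_def Tl_add scale_right_distrib)
          ultimately have w: "scale g e + (scale g (Tl c z) + scale \<beta> (Tl c (Tl c z))) \<in> M" by simp
          have g0: "g = 0"
          proof (rule ccontr)
            assume g: "g \<noteq> 0"
            have A: "scale g e + (scale g (Tl c z) + scale \<beta> (Tl c (Tl c z))) \<in> Mz"
              using w MMz by blast
            have B: "scale g (Tl c z) + scale \<beta> (Tl c (Tl c z)) \<in> Mz"
              using subMz TzMz TTzMz by (intro subspace_add subspace_scale) auto
            from subspace_diff[OF subMz A B] have "scale g e \<in> Mz" by simp
            with g eMz subspace_inv_scale[OF subMz] show False by blast
          qed
          with w have "scale \<beta> (Tl c (Tl c z)) \<in> M" by simp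
          then have "\<beta> = 0" using subspace_inv_scale[OF subM] TTz by blast
          with g0 show "g = 0 \<and> \<beta> = 0" by simp
        qed
        have i2: "ind2 (gen (insert x1 G)) z"
        proof (rule ind2I_Tl[of _ c])
          fix g \<beta> assume h: "scale g z + scale \<beta> (Tl c z) \<in> gen (insert x1 G)"
          then obtain n q where nq: "n \<in> M" "scale g z + scale \<beta> (Tl c z) = n + PE q x1"
            unfolding gen_insert M_def by blast
          define m1 where "m1 = PE q e - scale (poly q c) e"
          have m1: "m1 \<in> M" unfolding m1_def by (rule PE_eval[OF stM Te])
          have PEx1: "PE q x1 = m1 + scale (poly q c) e + PE q (Tl c z)"
            by (simp add: x1_def PE_xadd m1_def)
          have pq: "poly q c = 0"
          proof (rule ccontr)
            assume pq: "poly q c \<noteq> 0"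
            have "scale (poly q c) e = scale g z + scale \<beta> (Tl c z) - n - m1 - PE q (Tl c z)"
              using nq(2) PEx1 by (simp add: algebra_simps)
            also have "\<dots> \<in> Mz"
              using subMz zMz TzMz MMz nq(1) m1 PE_in[OF stMz TzMz]
              by (intro subspace_diff subspace_add subspace_scale) auto
            finally show False using pq eMz subspace_inv_scale[OF subMz] by blast
          qed
          define s where "s = synthetic_div q c"
          have qs: "q = [:-c, 1:] * s" using synthetic_div_correct'[of c q] pq by (simp add: s_def)
          have PEq: "PE q (Tl c z) = PE s (Tl c (Tl c z))"
            unfolding qs mult.commute[of "[:-c,1:]" s] PE_mult PE_Tl ..
          have PEqe: "PE q e = m1" using pq by (simp add: m1_def)
          have key: "scale g z + scale \<beta> (Tl c z) - PE s (Tl c (Tl c z)) \<in> M"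
          proof -
            have "scale g z + scale \<beta> (Tl c z) - PE s (Tl c (Tl c z)) = n + m1"
              using nq(2) PEx1 pq PEq by simp
            then show ?thesis using subspace_add[OF subM nq(1) m1] by simp
          qed
          have g0: "g = 0"
          proof (rule ccontr)
            assume g: "g \<noteq> 0"
            define r where "r = [:g - \<beta> * c, \<beta>:] - s * ([:-c, 1:] * [:-c, 1:])"
            have e1: "PE [:g - \<beta> * c, \<beta>:] z = scale g z + scale \<beta> (Tl c z)"
              by (simp add: PE_lin2 Tl_def scale_right_diff_distrib scale_left_diff_distrib)
            have e2: "PE (s * ([:-c, 1:] * [:-c, 1:])) z = PE s (Tl c (Tl c z))"
              by (simp only: PE_mult PE_Tl)
            have "PE r z = scale g z + scale \<beta> (Tl c z) - PE s (Tl c (Tl c z))"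
              unfolding r_def PE_diff e1 e2 ..
            moreover have "poly r c = g" by (simp add: r_def algebra_simps)
            ultimately show False using H[of r z] key g zM by simp
          qed
          have b0: "\<beta> = 0"
          proof (rule ccontr)
            assume b: "\<beta> \<noteq> 0"
            define r where "r = [:\<beta>:] - s * [:-c, 1:]"
            have "PE r (Tl c z) = scale \<beta> (Tl c z) - PE s (Tl c (Tl c z))"
              unfolding r_def PE_diff PE_mult PE_Tl PE_const ..
            moreover have "poly r c = \<beta>" by (simp add: r_def)
            ultimately show False using H[of r "Tl c z"] key g0 b Tz by simp
          qed
          from g0 b0 show "g = 0 \<and> \<beta> = 0" by simp
        qed
        have "e \<in> gen (insert z (insert x1 G))"
        proof -
          have x1m: "x1 \<in> gen (insert x1 G)" using gen_sup by blast
          have "x1 + PE (- [:-c, 1:]) z = e" unfolding PE_neg PE_Tl x1_def by simp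
          then show ?thesis using gen_insert_mem[OF x1m, of "- [:-c, 1:]" z] by simp
        qed
        with i1 i2 show ?thesis unfolding M_def by blast
      qed
    qed
  qed
qed

end


context sctx2 begin

lemma stepA2:
  assumes G: "finite G" and e: "e \<notin> gen G"
    and caseA: "\<And>c F. finite F \<Longrightarrow> \<not> range (\<lambda>x. Tl c (Tl c x)) \<subseteq> span F"
  shows "\<exists>x1 x2. ind2 (gen G) x1 \<and> ind2 (gen (insert x1 G)) x2 \<and> e \<in> gen (insert x2 (insert x1 G))"
proof -
  from stepA1[OF G e caseA]
  show ?thesis
  proof
    assume "\<exists>x. ind2 (gen G) x \<and> e \<in> gen (insert x G)"
    then obtain x where x: "ind2 (gen G) x" "e \<in> gen (insert x G)" by blast
    have G': "finite (insert x G)" using G by simp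
    obtain e' where e': "e' \<notin> gen (insert x G)" using exists_out[OF G'] by blast
    have "\<exists>x'. ind2 (gen (insert x G)) x'"
      using stepA1[OF G' e' caseA] by blast
    then obtain x' where x': "ind2 (gen (insert x G)) x'" by blast
    have "gen (insert x G) \<subseteq> gen (insert x' (insert x G))" by (rule gen_mono) blast
    with x x' show ?thesis by blast
  qed
qed

definition target :: "nat \<Rightarrow> 'b set \<Rightarrow> 'b" where
  "target k S = (if from_nat_into C k \<notin> gen S then from_nat_into C k else (SOME e. e \<notin> gen S))"

definition stepA :: "nat \<Rightarrow> 'b set \<Rightarrow> 'b \<times> 'b" where
  "stepA k S = (SOME pr. ind2 (gen S) (fst pr) \<and> ind2 (gen (insert (fst pr) S)) (snd pr)
                  \<and> target k S \<in> gen (insert (snd pr) (insert (fst pr) S)))"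

primrec SA :: "nat \<Rightarrow> 'b set" where
  "SA 0 = {}"
| "SA (Suc k) = insert (snd (stepA k (SA k))) (insert (fst (stepA k (SA k))) (SA k))"

definition gA :: "nat \<Rightarrow> 'b" where
  "gA n = (if even n then fst (stepA (n div 2) (SA (n div 2))) else snd (stepA (n div 2) (SA (n div 2))))"

lemma SA_eq: "SA k = gA ` {m. m < 2 * k}"
proof (induction k)
  case 0 then show ?case by simp
next
  case (Suc k)
  have "{m. m < 2 * Suc k} = insert (2*k+1) (insert (2*k) {m. m < 2 * k})" by auto
  moreover have "gA (2*k) = fst (stepA k (SA k))" "gA (2*k+1) = snd (stepA k (SA k))"
    by (simp_all add: gA_def)
  ultimately show ?case using Suc by simp
qed

lemma SA_fin: "finite (SA k)"
  by (induction k) auto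


lemma caseA_props:
  assumes caseA: "\<And>c F. finite F \<Longrightarrow> \<not> range (\<lambda>x. Tl c (Tl c x)) \<subseteq> span F"
  shows "ind2 (gen (SA k)) (fst (stepA k (SA k))) \<and>
         ind2 (gen (insert (fst (stepA k (SA k))) (SA k))) (snd (stepA k (SA k))) \<and>
         from_nat_into C k \<in> gen (SA (Suc k))"
proof -
  define S where "S = SA k"
  have fS: "finite S" unfolding S_def by (rule SA_fin)
  have tS: "target k S \<notin> gen S"
  proof (cases "from_nat_into C k \<in> gen S")
    case True
    obtain e where "e \<notin> gen S" using exists_out[OF fS] by blast
    then have "(SOME e. e \<notin> gen S) \<notin> gen S" by (rule someI)
    with True show ?thesis unfolding target_def by simp
  next
    case False then show ?thesis unfolding target_def by simp
  qed
  obtain x1 x2 where x: "ind2 (gen S) x1" "ind2 (gen (insert x1 S)) x2" "target k S \<in> gen (insert x2 (insert x1 S))"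
    using stepA2[OF fS tS caseA] by blast
  have P: "ind2 (gen S) (fst (stepA k S)) \<and> ind2 (gen (insert (fst (stepA k S)) S)) (snd (stepA k S))
                  \<and> target k S \<in> gen (insert (snd (stepA k S)) (insert (fst (stepA k S)) S))"
    unfolding stepA_def by (rule someI[of _ "(x1, x2)"]) (use x in simp)
  have SS: "SA (Suc k) = insert (snd (stepA k S)) (insert (fst (stepA k S)) S)" by (simp add: S_def)
  have "from_nat_into C k \<in> gen (SA (Suc k))"
  proof (cases "from_nat_into C k \<in> gen S")
    case True
    have "gen S \<subseteq> gen (SA (Suc k))" unfolding SS by (rule gen_mono) blast
    with True show ?thesis by blast
  next
    case False
    then have "target k S = from_nat_into C k" unfolding target_def by simp
    with P SS show ?thesis by simp
  qed
  with P show ?thesis unfolding S_def by simp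
qed

lemma caseA_good:
  assumes caseA: "\<And>c F. finite F \<Longrightarrow> \<not> range (\<lambda>x. Tl c (Tl c x)) \<subseteq> span F"
  shows "\<exists>(r :: nat rel) M. good_stratification scale u r M"
proof -
  have G2: "ind2 (gen (gA ` {b. id b < id a})) (gA a)" for a
  proof -
    obtain k where k: "a = 2 * k \<or> a = 2 * k + 1" by (metis oddE evenE)
    then show ?thesis
    proof
      assume a: "a = 2 * k"
      have "gA ` {b. id b < id a} = SA k" using a SA_eq by simp
      moreover have "gA a = fst (stepA k (SA k))" using a by (simp add: gA_def)
      ultimately show ?thesis using caseA_props[OF caseA, of k] by simp
    next
      assume a: "a = 2 * k + 1"
      have "{b. b < a} = insert (2 * k) {m. m < 2 * k}" using a by auto
      then have "gA ` {b. id b < id a} = insert (gA (2*k)) (SA k)" using SA_eq by simp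
      moreover have "gA (2*k) = fst (stepA k (SA k))" by (simp add: gA_def)
      moreover have "gA a = snd (stepA k (SA k))" using a by (simp add: gA_def)
      ultimately show ?thesis using caseA_props[OF caseA, of k] by simp
    qed
  qed
  have G3: "span (\<Union>a. gen (gA ` {b. id b \<le> id a})) = UNIV"
  proof -
    have "C \<subseteq> (\<Union>a. gen (gA ` {b. id b \<le> id a}))"
    proof
      fix x assume "x \<in> C"
      then obtain k where k: "x = from_nat_into C k"
        using from_nat_into_surj[OF C_count] by metis
      have "x \<in> gen (SA (Suc k))" using caseA_props[OF caseA, of k] k by simp
      moreover have "SA (Suc k) = gA ` {b. id b \<le> id (2 * k + 1)}"
      proof -
        have "{m. m < 2 * Suc k} = {b. b \<le> 2 * k + 1}" by auto
        then show ?thesis using SA_eq[of "Suc k"] by simp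
      qed
      ultimately show "x \<in> (\<Union>a. gen (gA ` {b. id b \<le> id a}))" by (intro UN_I[of "2*k+1"]) simp_all
    qed
    then have "span C \<subseteq> span (\<Union>a. gen (gA ` {b. id b \<le> id a}))" by (rule span_mono)
    then show ?thesis using C_span by auto
  qed
  have "good_stratification scale u {(m,n). id m \<le> id n} (\<lambda>a. gen (gA ` {b. id b \<le> id a}))"
  proof (rule good_from_gens)
    show "inj (id :: nat \<Rightarrow> nat)" by simp
    show "\<exists>b. id a < id b" for a :: nat by (rule exI[of _ "Suc a"]) simp
    show "gA a \<notin> gen (gA ` {b. id b < id a})" for a
      using ind2_notin[OF G2 gen_subspace] .
    show "ind2 (gen (gA ` {b. id b < id a})) (gA a)" for a by (rule G2)
  qed (rule G3)
  then show ?thesis by blast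
qed

end


context sctx begin

lemma Tl_linear: "Vector_Spaces.linear scale scale (Tl c)"
  using lin unfolding Tl_def
  by (simp add: Vector_Spaces.linear_iff uL.add uL.scale algebra_simps scale_right_diff_distrib scale_left_commute)

lemma Tl_span: "Tl c ` span A = span (Tl c ` A)"
proof -
  interpret TL: Vector_Spaces.linear scale scale "Tl c" by (rule Tl_linear)
  show ?thesis by (simp add: TL.span_image)
qed

lemma u_Tl_comm: "u (Tl c x) = Tl c (u x)"
  by (simp add: Tl_def uL.diff uL.scale)

lemma Tl_stable: "stable S \<Longrightarrow> Tl c ` S \<subseteq> S"
  using Tl_in by blast

lemma fin_support: "x \<in> span A \<Longrightarrow> \<exists>t. finite t \<and> t \<subseteq> A \<and> x \<in> span t"
proof -
  assume "x \<in> span A"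
  then obtain t r where "finite t" "t \<subseteq> A" "x = (\<Sum>a\<in>t. scale (r a) a)"
    unfolding span_explicit by blast
  moreover have "(\<Sum>a\<in>t. scale (r a) a) \<in> span t"
    by (intro span_sum span_scale span_base)
  ultimately show ?thesis by blast
qed

lemma fin_support_set: "finite X \<Longrightarrow> X \<subseteq> span A \<Longrightarrow> \<exists>W. finite W \<and> W \<subseteq> A \<and> X \<subseteq> span W"
proof (induction X rule: finite_induct)
  case empty
  have "finite {} \<and> {} \<subseteq> A \<and> {} \<subseteq> span {}" by simp
  then show ?case by (rule exI)
next
  case (insert x X)
  from insert.prems have xA: "x \<in> span A" and XA: "X \<subseteq> span A" by simp_all
  from insert.IH[OF XA] obtain W where W: "finite W" "W \<subseteq> A" "X \<subseteq> span W" by (elim exE conjE)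
  from fin_support[OF xA] obtain t where t: "finite t" "t \<subseteq> A" "x \<in> span t" by (elim exE conjE)
  have s1: "span W \<subseteq> span (W \<union> t)" "span t \<subseteq> span (W \<union> t)" by (simp_all add: span_mono)
  have "X \<subseteq> span (W \<union> t)" using W(3) s1(1) by (rule subset_trans)
  moreover have "x \<in> span (W \<union> t)" using t(3) s1(2) by (rule subsetD[rotated])
  ultimately have "insert x X \<subseteq> span (W \<union> t)" by simp
  moreover have "finite (W \<union> t)" "W \<union> t \<subseteq> A" using W t by simp_all
  ultimately show ?case by blast
qed

end

locale caseB = sctx2 +
  fixes c F0
  assumes F0: "finite F0" "range (\<lambda>x. Tl c (Tl c x)) \<subseteq> span F0"
begin

abbreviation T where "T \<equiv> Tl c"
definition K where "K = range (\<lambda>x. T (T x))"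

lemma K_stable: "stable K"
  unfolding stable_def
proof
  interpret TL: Vector_Spaces.linear scale scale "Tl c" by (rule Tl_linear)
  have "K = Tl c ` (Tl c ` UNIV)" unfolding K_def by auto
  moreover have "subspace (Tl c ` UNIV)" by (rule TL.subspace_image) simp
  then have "subspace (Tl c ` (Tl c ` UNIV))" by (rule TL.subspace_image)
  ultimately show "subspace K" by simp
  show "u ` K \<subseteq> K"
  proof
    fix y assume "y \<in> u ` K"
    then obtain x where "y = u (T (T x))" unfolding K_def by blast
    then have "y = T (T (u x))" by (simp add: u_Tl_comm)
    then show "y \<in> K" unfolding K_def by blast
  qed
qed

definition Inf where "Inf S \<longleftrightarrow> (\<forall>F. finite F \<longrightarrow> \<not> range T \<subseteq> span (S \<union> F))"

lemma Inf_K: "Inf K"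
  unfolding Inf_def
proof (intro allI impI notI)
  fix F assume F: "finite F" "range T \<subseteq> span (K \<union> F)"
  have "K \<union> F \<subseteq> span (F0 \<union> F)"
    using F0(2) span_mono[of F0 "F0 \<union> F"] span_superset[of "F0 \<union> F"] unfolding K_def by blast
  then have "span (K \<union> F) \<subseteq> span (F0 \<union> F)" using span_minimal by blast
  with F have "range T \<subseteq> span (F0 \<union> F)" by blast
  with rank_inf[of "F0 \<union> F" c] F0 F show False by simp
qed

lemma Inf_mono: "Inf S \<Longrightarrow> S' \<subseteq> span (S \<union> F') \<Longrightarrow> finite F' \<Longrightarrow> Inf S'"
  unfolding Inf_def
proof (intro allI impI notI)
  fix F assume h: "\<forall>F. finite F \<longrightarrow> \<not> range T \<subseteq> span (S \<union> F)" "S' \<subseteq> span (S \<union> F')" "finite F'"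
    "finite F" "range T \<subseteq> span (S' \<union> F)"
  have "S' \<union> F \<subseteq> span (S \<union> (F' \<union> F))"
    using h(2) span_mono[of "S \<union> F'" "S \<union> (F' \<union> F)"] span_superset[of "S \<union> (F' \<union> F)"] by blast
  then have "span (S' \<union> F) \<subseteq> span (S \<union> (F' \<union> F))" using span_minimal by blast
  with h(5) have "range T \<subseteq> span (S \<union> (F' \<union> F))" by blast
  with h(1) h(3,4) show False by blast
qed

definition nxt :: "'b set \<Rightarrow> 'b list \<Rightarrow> 'b" where
  "nxt S L = (SOME y. T y \<notin> span (S \<union> set L \<union> T ` set L))"

primrec ysl :: "'b set \<Rightarrow> nat \<Rightarrow> 'b list" where
  "ysl S 0 = []"
| "ysl S (Suc n) = ysl S n @ [nxt S (ysl S n)]"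

definition yseq :: "'b set \<Rightarrow> nat \<Rightarrow> 'b" where
  "yseq S n = nxt S (ysl S n)"

lemma ysl_eq: "ysl S n = map (yseq S) [0..<n]"
  by (induction n) (auto simp: yseq_def)

lemma yseq_prop:
  assumes "Inf S"
  shows "T (yseq S n) \<notin> span (S \<union> yseq S ` {..<n} \<union> T ` yseq S ` {..<n})"
proof -
  have sl: "set (ysl S n) = yseq S ` {..<n}" by (auto simp: ysl_eq)
  have "finite (set (ysl S n) \<union> T ` set (ysl S n))" by simp
  then have "\<not> range T \<subseteq> span (S \<union> (set (ysl S n) \<union> T ` set (ysl S n)))"
    using assms unfolding Inf_def by blast
  then obtain x where "T x \<notin> span (S \<union> set (ysl S n) \<union> T ` set (ysl S n))"
    by (auto simp: Un_assoc)
  then have "T (nxt S (ysl S n)) \<notin> span (S \<union> set (ysl S n) \<union> T ` set (ysl S n))"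
    unfolding nxt_def by (rule someI)
  then show ?thesis by (simp add: yseq_def sl)
qed

end


context sctx begin
lemma ind2_anti: "ind2 N x \<Longrightarrow> N' \<subseteq> N \<Longrightarrow> ind2 N' x"
  unfolding ind2_def by blast
end

context caseB begin

lemma T_span_closed:
  assumes "T ` A \<subseteq> span A" shows "T ` span A \<subseteq> span A"
proof -
  have "T ` span A = span (T ` A)" by (rule Tl_span)
  also have "\<dots> \<subseteq> span (span A)" using assms by (rule span_mono)
  finally show ?thesis by (simp add: span_span)
qed

lemma u_span_closed:
  assumes "u ` A \<subseteq> span A" shows "u ` span A \<subseteq> span A"
proof -
  have "u ` span A = span (u ` A)" by (simp add: uL.span_image)
  also have "\<dots> \<subseteq> span (span A)" using assms by (rule span_mono)
  finally show ?thesis by (simp add: span_span)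
qed

lemma TT_K: "T (T x) \<in> K" unfolding K_def by simp

context
  fixes S assumes stS: "stable S" and KS: "K \<subseteq> S" and InfS: "Inf S"
begin

abbreviation y where "y \<equiv> yseq S"
definition Q where "Q n = y ` {..<n} \<union> T ` y ` {..<n}"

lemma subS: "subspace S" using stS by (simp add: stable_def)

lemma TQ: "T ` (S \<union> Q n) \<subseteq> span (S \<union> Q n)"
proof
  fix v assume "v \<in> T ` (S \<union> Q n)"
  then obtain w where w: "w \<in> S \<union> Q n" "v = T w" by blast
  have "T w \<in> S \<union> Q n"
  proof (cases "w \<in> S")
    case True then show ?thesis using Tl_in[OF stS] by blast
  next
    case False
    then obtain i where i: "i < n" "w = y i \<or> w = T (y i)" using w(1) unfolding Q_def by blast
    from i(2) show ?thesis
    proof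
      assume "w = y i" then show ?thesis using i(1) unfolding Q_def by blast
    next
      assume "w = T (y i)" then have "T w \<in> K" by (simp add: TT_K)
      then show ?thesis using KS by blast
    qed
  qed
  then show "v \<in> span (S \<union> Q n)" using w(2) span_superset by blast
qed

lemma yprop: "T (y n) \<notin> span (S \<union> Q n)"
  using yseq_prop[OF InfS, of n] unfolding Q_def by (simp add: Un_assoc)

lemma L1: "y n \<notin> span (S \<union> Q n)"
proof
  assume "y n \<in> span (S \<union> Q n)"
  then have "T (y n) \<in> T ` span (S \<union> Q n)" by blast
  with T_span_closed[OF TQ] yprop show False by blast
qed

lemma L2: "T (y n) \<notin> span (insert (y n) (S \<union> Q n))"
proof
  define A where "A = S \<union> Q n"
  assume "T (y n) \<in> span (insert (y n) (S \<union> Q n))"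
  then obtain k where k: "T (y n) - scale k (y n) \<in> span A"
    unfolding span_breakdown_eq A_def by blast
  have k0: "k \<noteq> 0" using k yprop unfolding A_def by auto
  interpret TL: Vector_Spaces.linear scale scale "Tl c" by (rule Tl_linear)
  have TA: "T ` span A \<subseteq> span A" unfolding A_def by (rule T_span_closed[OF TQ])
  have "T (T (y n) - scale k (y n)) \<in> span A" using TA k by blast
  then have h1: "T (T (y n)) - scale k (T (y n)) \<in> span A"
    by (simp only: TL.diff TL.scale)
  have h2: "T (T (y n)) \<in> span A" using TT_K KS span_superset unfolding A_def by blast
  have "scale k (T (y n)) \<in> span A"
    using span_diff[OF h2 h1] by simp
  then have "T (y n) \<in> span A" using k0 span_scale[of "scale k (T (y n))" A "inverse k"] by simp
  with yprop show False unfolding A_def by blast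
qed

lemma L3: "ind2 (span (S \<union> Q n)) (y n)"
proof (rule ind2I_Tl[of _ c])
  fix g b assume h: "scale g (y n) + scale b (T (y n)) \<in> span (S \<union> Q n)"
  have b0: "b = 0"
  proof (rule ccontr)
    assume b: "b \<noteq> 0"
    have "T (y n) - scale (- (g / b)) (y n) = scale (inverse b) (scale g (y n) + scale b (T (y n)))"
      using b by (simp add: scale_right_distrib scale_scale divide_inverse mult.commute)
    also have "\<dots> \<in> span (S \<union> Q n)" using h by (rule span_scale)
    finally have "T (y n) \<in> span (insert (y n) (S \<union> Q n))"
      unfolding span_breakdown_eq by blast
    with L2 show False by blast
  qed
  with h have "scale g (y n) \<in> span (S \<union> Q n)" by simp
  then have "g = 0" using L1 span_scale[of "scale g (y n)" _ "inverse g"] by (cases "g = 0") auto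
  with b0 show "g = 0 \<and> b = 0" by simp
qed

definition z where "z k = (if even k then y (k div 2) else T (y (k div 2)))"

lemma z_img: "z ` {..<2*n} = Q n"
proof -
  have "{..<2*n} = (\<lambda>i. 2*i) ` {..<n} \<union> (\<lambda>i. 2*i+1) ` {..<n}"
  proof (rule set_eqI, rule iffI)
    fix k assume "k \<in> {..<2*n}"
    then show "k \<in> (\<lambda>i. 2*i) ` {..<n} \<union> (\<lambda>i. 2*i+1) ` {..<n}"
      by (cases "even k") (auto elim!: evenE oddE)
  qed auto
  moreover have "z ` ((\<lambda>i. 2*i) ` {..<n}) = y ` {..<n}"
    unfolding image_image z_def by simp
  moreover have "z ` ((\<lambda>i. 2*i+1) ` {..<n}) = T ` y ` {..<n}"
    unfolding image_image z_def by simp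
  ultimately show ?thesis unfolding Q_def by (simp add: image_Un)
qed

lemma z_prop: "z k \<notin> span (S \<union> z ` {..<k})"
proof (cases "even k")
  case True
  then obtain n where k: "k = 2*n" by (rule evenE)
  then show ?thesis using L1[of n] z_img[of n] by (simp add: z_def)
next
  case False
  then obtain n where k: "k = 2*n+1" by (rule oddE)
  have "{..<k} = insert (2*n) {..<2*n}" using k by auto
  then have "z ` {..<k} = insert (y n) (Q n)" using z_img[of n] by (simp add: z_def)
  then show ?thesis using L2[of n] k by (simp add: z_def)
qed

lemma z_inj: "inj z"
proof (rule injI)
  fix j k assume e: "z j = z k"
  show "j = k"
  proof (rule ccontr)
    assume "j \<noteq> k"
    then have "j < k \<or> k < j" by arith
    then show False
    proof
      assume "j < k"
      then have "z j \<in> span (S \<union> z ` {..<k})" by (intro span_base) auto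
      with z_prop[of k] e show False by simp
    next
      assume "k < j"
      then have "z k \<in> span (S \<union> z ` {..<j})" by (intro span_base) auto
      with z_prop[of j] e show False by simp
    qed
  qed
qed

lemma z_notS: "z k \<notin> S"
  using z_prop[of k] span_superset by blast

lemma z_indep:
  assumes "B0 \<subseteq> S" "independent B0"
  shows "independent (B0 \<union> z ` {..<k})"
proof (induction k)
  case 0 then show ?case using assms by simp
next
  case (Suc k)
  have "span (B0 \<union> z ` {..<k}) \<subseteq> span (S \<union> z ` {..<k})" using assms(1) by (intro span_mono) blast
  then have nz: "z k \<notin> span (B0 \<union> z ` {..<k})" using z_prop[of k] by blast
  have "B0 \<union> z ` {..<Suc k} = insert (z k) (B0 \<union> z ` {..<k})" by (auto simp: lessThan_Suc)
  then show ?case using Suc nz by (simp add: independent_insert)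
qed

end
end


context caseB begin

lemma InfBlock:
  assumes stS: "stable S" and KS: "K \<subseteq> S" and InfS: "Inf S"
  shows "Inf (S \<union> yseq S ` {n. even n} \<union> T ` yseq S ` {n. even n})"
  unfolding Inf_def
proof (intro allI impI notI)
  define E where "E = yseq S ` {n. even n} \<union> T ` yseq S ` {n. even n}"
  define zz where "zz = z S"
  have zz4: "zz (4*i) = yseq S (2*i)" "zz (4*i+1) = T (yseq S (2*i))" "zz (4*i+3) = T (yseq S (2*i+1))" for i
  proof -
    have "(4*i+3) div 2 = 2*i+1" by arith
    then show "zz (4*i) = yseq S (2*i)" "zz (4*i+1) = T (yseq S (2*i))" "zz (4*i+3) = T (yseq S (2*i+1))"
      unfolding zz_def z_def[OF stS KS InfS] by simp_all
  qed
  fix F assume F: "finite F" "range T \<subseteq> span (S \<union> yseq S ` {n. even n} \<union> T ` yseq S ` {n. even n} \<union> F)"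
  obtain B0 where B0: "B0 \<subseteq> S" "independent B0" "S \<subseteq> span B0"
    using maximal_independent_subset[of S] by metis
  have "S \<union> E \<union> F \<subseteq> span (B0 \<union> E \<union> F)"
  proof -
    have sb: "span B0 \<subseteq> span (B0 \<union> E \<union> F)" by (rule span_mono) (simp add: Un_assoc)
    have "S \<subseteq> span (B0 \<union> E \<union> F)" using B0(3) sb by (rule subset_trans)
    moreover have "E \<subseteq> span (B0 \<union> E \<union> F)" "F \<subseteq> span (B0 \<union> E \<union> F)"
      using span_superset[of "B0 \<union> E \<union> F"] by auto
    ultimately show ?thesis by (simp only: Un_subset_iff)
  qed
  then have spE: "span (S \<union> E \<union> F) \<subseteq> span (B0 \<union> E \<union> F)"
    by (rule span_minimal) simp
  define m where "m = card F"
  define X where "X = (\<lambda>i. zz (4*i+3)) ` {..m}"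
  have Xfin: "finite X" unfolding X_def by simp
  have "X \<subseteq> range T" unfolding X_def using zz4(3) by auto
  also have "range T \<subseteq> span (S \<union> E \<union> F)" using F(2) unfolding E_def by (simp add: Un_assoc)
  also note spE
  finally have "X \<subseteq> span (B0 \<union> E \<union> F)" .
  then obtain W where W: "finite W" "W \<subseteq> B0 \<union> E \<union> F" "X \<subseteq> span W"
    using fin_support_set[OF Xfin] by metis
  define W' where "W' = W - F"
  have W'fin: "finite W'" unfolding W'_def using W(1) by simp
  have E_z: "E \<subseteq> range zz"
  proof
    fix v assume "v \<in> E"
    then obtain n where n: "even n" "v = yseq S n \<or> v = T (yseq S n)" unfolding E_def by blast
    then obtain i where i: "n = 2*i" by (elim evenE)
    from n(2) show "v \<in> range zz"
    proof
      assume "v = yseq S n" then have "v = zz (4*i)" using zz4(1) i by simp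
      then show ?thesis by simp
    next
      assume "v = T (yseq S n)" then have "v = zz (4*i+1)" using zz4(2) i by simp
      then show ?thesis by simp
    qed
  qed
  have "finite (W' \<inter> E)" using W'fin by simp
  moreover have "W' \<inter> E \<subseteq> zz ` UNIV" using E_z by blast
  ultimately obtain Cn where Cn: "Cn \<subseteq> UNIV" "finite Cn" "W' \<inter> E = zz ` Cn"
    using finite_subset_image[of "W' \<inter> E" zz UNIV] by blast
  obtain N where N: "Cn \<subseteq> {..<N}" using finite_nat_bounded[OF Cn(2)] by blast
  define N' where "N' = N + 4*m + 4"
  define s where "s = W' \<union> X"
  have "s \<subseteq> B0 \<union> zz ` {..<N'}"
  proof
    fix v assume "v \<in> s"
    then have "v \<in> W' \<or> v \<in> X" unfolding s_def by blast
    then show "v \<in> B0 \<union> zz ` {..<N'}"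
    proof
      assume v: "v \<in> W'"
      then have "v \<in> B0 \<or> v \<in> W' \<inter> E" using W(2) unfolding W'_def by blast
      then show ?thesis
      proof
        assume "v \<in> W' \<inter> E"
        then obtain j where "j \<in> Cn" "v = zz j" using Cn(3) by blast
        then have "j < N'" "v = zz j" using N unfolding N'_def by auto
        then show ?thesis by blast
      qed blast
    next
      assume "v \<in> X"
      then obtain i where "i \<le> m" "v = zz (4*i+3)" unfolding X_def by blast
      then have "4*i+3 < N'" "v = zz (4*i+3)" unfolding N'_def by auto
      then show ?thesis by blast
    qed
  qed
  then have ind_s: "independent s"
    using z_indep[OF stS KS InfS B0(1,2), of N'] independent_mono unfolding zz_def by blast
  have fin2: "finite (W' \<union> F)" using W'fin F(1) by simp
  have s_sp: "s \<subseteq> span (W' \<union> F)"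
  proof -
    have "span W \<subseteq> span (W' \<union> F)" unfolding W'_def by (rule span_mono) blast
    then have "X \<subseteq> span (W' \<union> F)" using W(3) by blast
    moreover have "W' \<subseteq> span (W' \<union> F)" using span_superset[of "W' \<union> F"] by blast
    ultimately show ?thesis unfolding s_def by blast
  qed
  have "card s \<le> card (W' \<union> F)" using independent_span_bound[OF fin2 ind_s s_sp] by simp
  also have "\<dots> \<le> card W' + card F" by (rule card_Un_le)
  finally have c1: "card s \<le> card W' + m" unfolding m_def .
  have injz: "inj zz" unfolding zz_def by (rule z_inj[OF stS KS InfS])
  have disj: "W' \<inter> X = {}"
  proof (rule ccontr)
    assume "W' \<inter> X \<noteq> {}"
    then obtain i where i: "zz (4*i+3) \<in> W'" unfolding X_def by blast
    then have "zz (4*i+3) \<in> B0 \<or> zz (4*i+3) \<in> E" using W(2) unfolding W'_def by blast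
    then show False
    proof
      assume "zz (4*i+3) \<in> B0"
      then show False using z_notS[OF stS KS InfS] B0(1) unfolding zz_def by blast
    next
      assume "zz (4*i+3) \<in> E"
      then obtain n where n: "even n" "zz (4*i+3) = yseq S n \<or> zz (4*i+3) = T (yseq S n)"
        unfolding E_def by blast
      then obtain j where j: "n = 2*j" by (elim evenE)
      from n(2) have "zz (4*i+3) = zz (4*j) \<or> zz (4*i+3) = zz (4*j+1)" using zz4 j by simp
      then have "4*i+3 = 4*j \<or> 4*i+3 = 4*j+1" using injD[OF injz] by blast
      then show False by arith
    qed
  qed
  have "card X = m + 1"
  proof -
    have "inj_on (\<lambda>i. zz (4*i+3)) {..m}"
    proof (rule inj_onI)
      fix a b assume "zz (4*a+3) = zz (4*b+3)"
      then have "4*a+3 = 4*b+3" by (rule injD[OF injz])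
      then show "a = b" by simp
    qed
    then show ?thesis unfolding X_def by (simp add: card_image)
  qed
  moreover have "card s = card W' + card X"
    unfolding s_def by (rule card_Un_disjoint[OF W'fin Xfin disj])
  ultimately show False using c1 by simp
qed

end


context caseB begin

lemma stab_Y:
  assumes stS: "stable S" and KS: "K \<subseteq> S"
  shows "stable (span (S \<union> Y \<union> T ` Y))"
proof -
  have "u ` (S \<union> Y \<union> T ` Y) \<subseteq> span (S \<union> Y \<union> T ` Y)"
  proof
    fix v assume "v \<in> u ` (S \<union> Y \<union> T ` Y)"
    then obtain w where w: "w \<in> S \<union> Y \<union> T ` Y" "v = u w" by blast
    have sup: "S \<union> Y \<union> T ` Y \<subseteq> span (S \<union> Y \<union> T ` Y)" by (rule span_superset)
    consider (a) "w \<in> S" | (b) "w \<in> Y" | (c) x where "x \<in> Y" "w = T x" using w(1) by blast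
    then show "v \<in> span (S \<union> Y \<union> T ` Y)"
    proof cases
      case a
      then have "u w \<in> S" using stS unfolding stable_def by blast
      then show ?thesis using w(2) sup by blast
    next
      case b
      have "u w = T w + scale c w" by (rule u_Tl)
      moreover have "T w \<in> span (S \<union> Y \<union> T ` Y)" "w \<in> span (S \<union> Y \<union> T ` Y)" using b sup by blast+
      ultimately show ?thesis using w(2) by (simp add: span_add span_scale)
    next
      case c
      have "u w = T (T x) + scale c (T x)" using c(2) by (simp add: u_Tl[of _ c])
      moreover have "T (T x) \<in> span (S \<union> Y \<union> T ` Y)" using TT_K KS sup by blast
      moreover have "T x \<in> span (S \<union> Y \<union> T ` Y)" using c(1) sup by blast
      ultimately show ?thesis using w(2) by (simp add: span_add span_scale)
    qed
  qed
  then show ?thesis unfolding stable_def using u_span_closed by blast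
qed

definition SB :: "'b set \<Rightarrow> 'b set" where "SB G = span (gen G \<union> K)"

lemma SB_stable: "stable (SB G)"
  unfolding SB_def by (rule stable_span_union[of "{gen G, K}", simplified]) (auto intro: gen_stable K_stable)

lemma K_SB: "K \<subseteq> SB G" unfolding SB_def using span_superset by blast

lemma gen_SB: "gen G \<subseteq> SB G" unfolding SB_def using span_superset by blast

lemma out_Inf: "Inf (SB G) \<Longrightarrow> \<exists>e. e \<notin> gen G"
proof (rule ccontr)
  assume h: "Inf (SB G)" "\<nexists>e. e \<notin> gen G"
  then have "range T \<subseteq> span (SB G \<union> {})" using gen_SB span_superset[of "SB G"] by auto
  with h(1) show False unfolding Inf_def by blast
qed

lemma Inf_insert: assumes "Inf (SB G)" shows "Inf (SB (insert t G))"
proof -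
  obtain Ft where Ft: "finite Ft" "cyc t \<subseteq> span Ft" using cyc_finsp by blast
  have "gen (insert t G) \<subseteq> span (SB G \<union> Ft)"
  proof
    fix v assume "v \<in> gen (insert t G)"
    then obtain n p where v: "v = n + PE p t" "n \<in> gen G" unfolding gen_insert by blast
    have "n \<in> span (SB G \<union> Ft)" using v(2) gen_SB span_superset[of "SB G \<union> Ft"] by blast
    moreover have "PE p t \<in> span Ft" using PE_in_cyc Ft(2) by blast
    then have "PE p t \<in> span (SB G \<union> Ft)" using span_mono[of Ft "SB G \<union> Ft"] by blast
    ultimately show "v \<in> span (SB G \<union> Ft)" using v(1) span_add by blast
  qed
  moreover have "K \<subseteq> span (SB G \<union> Ft)" using K_SB span_superset[of "SB G \<union> Ft"] by blast
  ultimately have "SB (insert t G) \<subseteq> span (SB G \<union> Ft)" unfolding SB_def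
    by (intro span_minimal) auto
  then show ?thesis by (rule Inf_mono[OF assms _ Ft(1)])
qed

definition tgt :: "nat \<Rightarrow> 'b set \<Rightarrow> 'b" where
  "tgt k G = (if from_nat_into C k \<notin> gen G then from_nat_into C k else (SOME e. e \<notin> gen G))"

lemma tgt_out: assumes "Inf (SB G)" shows "tgt k G \<notin> gen G"
proof -
  obtain e where "e \<notin> gen G" using out_Inf[OF assms] by blast
  then have "(SOME e. e \<notin> gen G) \<notin> gen G" by (rule someI)
  then show ?thesis unfolding tgt_def by simp
qed

definition blk :: "nat \<Rightarrow> 'b set \<Rightarrow> nat \<Rightarrow> 'b" where
  "blk k G = (if k = 0 then (\<lambda>j. yseq (SB G) (2*j))
              else (\<lambda>j. if j = 0 then tgt (k-1) G else yseq (SB (insert (tgt (k-1) G) G)) (2*(j-1))))"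

primrec GB :: "nat \<Rightarrow> 'b set" where
  "GB 0 = {}"
| "GB (Suc k) = GB k \<union> range (blk k (GB k))"

definition gB :: "nat \<Rightarrow> 'b" where
  "gB n = blk (fst (prod_decode n)) (GB (fst (prod_decode n))) (snd (prod_decode n))"

end


context caseB begin

definition SS :: "nat \<Rightarrow> 'b set \<Rightarrow> 'b set" where
  "SS k G = (if k = 0 then SB G else SB (insert (tgt (k-1) G) G))"

lemma blk_eq: "blk k G = (if k = 0 then (\<lambda>j. yseq (SS k G) (2*j))
              else (\<lambda>j. if j = 0 then tgt (k-1) G else yseq (SS k G) (2*(j-1))))"
  unfolding blk_def SS_def by simp

lemma GB_Inf: "Inf (SB (GB k))"
proof (induction k)
  case 0
  have g0: "gen {} = {0}" by (simp add: gen_def)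
  have "K \<subseteq> span K" by (rule span_superset)
  moreover have "0 \<in> span K" by (rule span_zero)
  ultimately have "gen {} \<union> K \<subseteq> span K" using g0 by simp
  then have "span (gen {} \<union> K) \<subseteq> span K" by (rule span_minimal[OF _ subspace_span])
  then have "SB (GB 0) \<subseteq> span (K \<union> {})" unfolding SB_def by simp
  then show ?case by (rule Inf_mono[OF Inf_K _ finite.emptyI])
next
  case (Suc k)
  define G where "G = GB k"
  define S' where "S' = SS k G"
  have IS': "Inf S'"
  proof (cases "k = 0")
    case True then show ?thesis using Suc.IH unfolding S'_def SS_def G_def by simp
  next
    case False then show ?thesis using Inf_insert[OF Suc.IH] unfolding S'_def SS_def G_def by simp
  qed
  have stS': "stable S'" unfolding S'_def SS_def by (simp add: SB_stable)
  have KS': "K \<subseteq> S'" unfolding S'_def SS_def by (simp add: K_SB)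
  define Y where "Y = yseq S' ` {n. even n}"
  define P where "P = span (S' \<union> Y \<union> T ` Y)"
  have stP: "stable P" unfolding P_def by (rule stab_Y[OF stS' KS'])
  have S'P: "S' \<union> Y \<subseteq> P" unfolding P_def using span_superset[of "S' \<union> Y \<union> T ` Y"] by blast
  have GS': "G \<subseteq> S'"
  proof -
    have a: "G \<subseteq> gen G" by (rule gen_sup)
    have b: "gen G \<subseteq> gen (insert (tgt (k-1) G) G)" by (rule gen_mono) blast
    show ?thesis
    proof (cases "k = 0")
      case True
      have "G \<subseteq> SB G" using a gen_SB[of G] by (rule subset_trans)
      then show ?thesis unfolding S'_def SS_def using True by simp
    next
      case False
      have "G \<subseteq> SB (insert (tgt (k-1) G) G)" using a b gen_SB[of "insert (tgt (k-1) G) G"] by blast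
      then show ?thesis unfolding S'_def SS_def using False by simp
    qed
  qed
  have rng: "range (blk k G) \<subseteq> S' \<union> Y"
  proof
    fix v assume "v \<in> range (blk k G)"
    then obtain j where v: "v = blk k G j" by blast
    show "v \<in> S' \<union> Y"
    proof (cases "k = 0 \<or> j \<noteq> 0")
      case True
      then have "v = yseq S' (2 * (if k = 0 then j else j - 1))" using v unfolding blk_eq S'_def by auto
      then show ?thesis unfolding Y_def by auto
    next
      case False
      then have "v = tgt (k-1) G" using v unfolding blk_eq by simp
      moreover have "tgt (k-1) G \<in> gen (insert (tgt (k-1) G) G)" using gen_sup by blast
      ultimately show ?thesis using False gen_SB unfolding S'_def SS_def by auto
    qed
  qed
  have "GB (Suc k) \<subseteq> P" using GS' rng S'P unfolding G_def by auto
  then have "gen (GB (Suc k)) \<subseteq> P" using stP by (rule gen_min)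
  moreover have "K \<subseteq> P" using KS' S'P by blast
  ultimately have sub: "SB (GB (Suc k)) \<subseteq> span ((S' \<union> Y \<union> T ` Y) \<union> {})" unfolding SB_def P_def
    by (simp, intro span_minimal) auto
  have inf: "Inf (S' \<union> Y \<union> T ` Y)" unfolding Y_def by (rule InfBlock[OF stS' KS' IS'])
  show ?case by (rule Inf_mono[OF inf sub finite.emptyI])
qed

lemma GB_eq: "GB k = gB ` {b. fst (prod_decode b) < k}"
proof (induction k)
  case 0 then show ?case by simp
next
  case (Suc k)
  have "{b. fst (prod_decode b) < Suc k} = {b. fst (prod_decode b) < k} \<union> {b. fst (prod_decode b) = k}" by auto
  moreover have "gB ` {b. fst (prod_decode b) = k} = range (blk k (GB k))"
  proof
    show "gB ` {b. fst (prod_decode b) = k} \<subseteq> range (blk k (GB k))" unfolding gB_def by auto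
    show "range (blk k (GB k)) \<subseteq> gB ` {b. fst (prod_decode b) = k}"
    proof
      fix v assume "v \<in> range (blk k (GB k))"
      then obtain j where "v = blk k (GB k) j" by blast
      then have "v = gB (prod_encode (k, j))" unfolding gB_def by simp
      then show "v \<in> gB ` {b. fst (prod_decode b) = k}" by force
    qed
  qed
  ultimately show ?case using Suc by (simp add: image_Un)
qed

lemma below_eq: "gB ` {b. prod_decode b < (k, j)} = GB k \<union> blk k (GB k) ` {..<j}"
proof -
  have "{b. prod_decode b < (k, j)} = {b. fst (prod_decode b) < k} \<union> prod_encode ` ((\<lambda>i. (k, i)) ` {..<j})"
  proof (rule set_eqI)
    fix b
    obtain k' j' where kj: "prod_decode b = (k', j')" by fastforce
    have "b = prod_encode (k', j')" using kj by (metis prod_decode_inverse)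
    then show "b \<in> {b. prod_decode b < (k, j)} \<longleftrightarrow> b \<in> {b. fst (prod_decode b) < k} \<union> prod_encode ` ((\<lambda>i. (k, i)) ` {..<j})"
      using kj by (auto simp: le_less)
  qed
  then have "gB ` {b. prod_decode b < (k, j)} = gB ` {b. fst (prod_decode b) < k} \<union> gB ` (prod_encode ` ((\<lambda>i. (k, i)) ` {..<j}))"
    by (simp add: image_Un)
  also have "gB ` {b. fst (prod_decode b) < k} = GB k" by (rule GB_eq[symmetric])
  also have "gB ` (prod_encode ` ((\<lambda>i. (k, i)) ` {..<j})) = blk k (GB k) ` {..<j}"
    by (simp add: image_image gB_def)
  finally show ?thesis .
qed

lemma le_eq: "gB ` {b. prod_decode b \<le> (k, j)} = GB k \<union> blk k (GB k) ` {..j}"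
proof -
  have "prod_decode b \<le> (k, j) \<longleftrightarrow> prod_decode b < (k, Suc j)" for b
  proof -
    obtain k' j' where kj: "prod_decode b = (k', j')" by fastforce
    show ?thesis unfolding kj by (simp add: less_Suc_eq_le)
  qed
  then have "{b. prod_decode b \<le> (k, j)} = {b. prod_decode b < (k, Suc j)}" by simp
  moreover have "{..<Suc j} = {..j}" by auto
  ultimately show ?thesis using below_eq[of k "Suc j"] by simp
qed

end


context caseB begin

lemma SS_props:
  "stable (SS k (GB k))" "K \<subseteq> SS k (GB k)" "Inf (SS k (GB k))" "GB k \<subseteq> SS k (GB k)"
  "k \<noteq> 0 \<Longrightarrow> tgt (k-1) (GB k) \<in> SS k (GB k)"
proof -
  define G where "G = GB k"
  show "stable (SS k (GB k))" unfolding SS_def by (simp add: SB_stable)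
  show "K \<subseteq> SS k (GB k)" unfolding SS_def by (simp add: K_SB)
  show "Inf (SS k (GB k))"
  proof (cases "k = 0")
    case True then show ?thesis using GB_Inf[of k] unfolding SS_def by simp
  next
    case False then show ?thesis using Inf_insert[OF GB_Inf[of k]] unfolding SS_def by simp
  qed
  have a: "G \<subseteq> gen G" by (rule gen_sup)
  have b: "gen G \<subseteq> gen (insert (tgt (k-1) G) G)" by (rule gen_mono) blast
  show "GB k \<subseteq> SS k (GB k)"
  proof (cases "k = 0")
    case True
    have "G \<subseteq> SB G" using a gen_SB[of G] by (rule subset_trans)
    then show ?thesis unfolding SS_def G_def using True by simp
  next
    case False
    have "G \<subseteq> SB (insert (tgt (k-1) G) G)" using a b gen_SB[of "insert (tgt (k-1) G) G"] by blast
    then show ?thesis unfolding SS_def G_def using False by simp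
  qed
  assume k: "k \<noteq> 0"
  have "tgt (k-1) G \<in> gen (insert (tgt (k-1) G) G)" using gen_sup by blast
  then show "tgt (k-1) (GB k) \<in> SS k (GB k)" using k gen_SB unfolding SS_def G_def by auto
qed

lemma G2core:
  assumes a: "prod_decode a = (k, j)" and nl: "\<not> (k \<noteq> 0 \<and> j = 0)"
  shows "ind2 (gen (gB ` {b. prod_decode b < prod_decode a})) (gB a)"
proof -
  define G where "G = GB k"
  define S' where "S' = SS k G"
  have stS': "stable S'" and KS': "K \<subseteq> S'" and IS': "Inf S'" and GS': "G \<subseteq> S'"
    using SS_props[of k] unfolding S'_def G_def by auto
  define n where "n = 2 * (if k = 0 then j else j - 1)"
  define Y where "Y = yseq S' ` {..<n}"
  define P where "P = span (S' \<union> Y \<union> T ` Y)"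
  have stP: "stable P" unfolding P_def by (rule stab_Y[OF stS' KS'])
  have ga: "gB a = yseq S' n" using a nl unfolding gB_def blk_eq n_def S'_def G_def by auto
  have "GB k \<union> blk k (GB k) ` {..<j} \<subseteq> S' \<union> Y"
  proof
    fix v assume "v \<in> GB k \<union> blk k (GB k) ` {..<j}"
    then consider "v \<in> GB k" | i where "i < j" "v = blk k (GB k) i" by blast
    then show "v \<in> S' \<union> Y"
    proof cases
      case 1 then show ?thesis using GS' unfolding G_def by blast
    next
      case 2
      show ?thesis
      proof (cases "k \<noteq> 0 \<and> i = 0")
        case True
        then have "v = tgt (k-1) G" using 2 unfolding blk_eq G_def by simp
        then show ?thesis using SS_props(5)[of k] True unfolding S'_def G_def by simp
      next
        case False
        then have "v = yseq S' (2 * (if k = 0 then i else i - 1))" using 2 unfolding blk_eq S'_def G_def by auto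
        moreover have "2 * (if k = 0 then i else i - 1) < n" using 2(1) False nl unfolding n_def by auto
        ultimately show ?thesis unfolding Y_def by blast
      qed
    qed
  qed
  also have "S' \<union> Y \<subseteq> P" unfolding P_def using span_superset[of "S' \<union> Y \<union> T ` Y"] by blast
  finally have "gen (GB k \<union> blk k (GB k) ` {..<j}) \<subseteq> P" using stP by (rule gen_min)
  then have sub: "gen (gB ` {b. prod_decode b < prod_decode a}) \<subseteq> span (S' \<union> Q S' n)"
    unfolding a below_eq P_def Y_def Q_def[OF stS' KS' IS'] by (simp add: Un_assoc)
  show ?thesis unfolding ga by (rule ind2_anti[OF L3[OF stS' KS' IS'] sub])
qed

lemma notmin:
  assumes a: "prod_decode a = (k, 0)" "k \<noteq> 0"
  shows "\<not> is_min_idx {(m,n). prod_decode m \<le> prod_decode n} a"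
    and "\<not> is_succ_idx {(m,n). prod_decode m \<le> prod_decode n} a"
proof -
  define r where "r = {(m,n). prod_decode m \<le> prod_decode n}"
  have F: "Field r = UNIV" unfolding r_def Field_def by auto
  show "\<not> is_min_idx {(m,n). prod_decode m \<le> prod_decode n} a"
  proof
    assume "is_min_idx {(m,n). prod_decode m \<le> prod_decode n} a"
    then have "(a, prod_encode (0,0)) \<in> r" unfolding is_min_idx_def r_def[symmetric] F by blast
    then show False using a unfolding r_def by simp
  qed
  show "\<not> is_succ_idx {(m,n). prod_decode m \<le> prod_decode n} a"
  proof
    assume "is_succ_idx {(m,n). prod_decode m \<le> prod_decode n} a"
    then obtain b where b: "b \<noteq> a" "(b, a) \<in> r" and
      nc: "\<not> (\<exists>c\<in>Field r. c \<noteq> a \<and> c \<noteq> b \<and> (b, c) \<in> r \<and> (c, a) \<in> r)"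
      unfolding is_succ_idx_def r_def[symmetric] by blast
    obtain k' j' where kj: "prod_decode b = (k', j')" by fastforce
    have "prod_decode b \<noteq> prod_decode a" using b(1) by (metis prod_decode_inverse)
    then have k': "k' < k" using b(2) a kj unfolding r_def by auto
    define c where "c = prod_encode (k', Suc j')"
    have "c \<noteq> a" using a k' unfolding c_def by (metis prod_encode_inverse prod.inject less_irrefl)
    moreover have "c \<noteq> b" using kj unfolding c_def by (metis prod_encode_inverse prod.inject n_not_Suc_n)
    moreover have "(b, c) \<in> r" "(c, a) \<in> r" using kj a k' unfolding r_def c_def by auto
    ultimately show False using nc F by blast
  qed
qed

lemma caseB_good: "\<exists>(r :: nat rel) M. good_stratification scale u r M"
proof -
  have "good_stratification scale u {(m,n). prod_decode m \<le> prod_decode n}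
          (\<lambda>a. gen (gB ` {b. prod_decode b \<le> prod_decode a}))"
  proof (rule good_from_gens)
    show "inj prod_decode" by (rule inj_prod_decode)
    show "\<exists>b. prod_decode a < prod_decode b" for a
    proof -
      obtain k j where "prod_decode a = (k, j)" by fastforce
      then show ?thesis by (intro exI[of _ "prod_encode (k, Suc j)"]) simp
    qed
    show "gB a \<notin> gen (gB ` {b. prod_decode b < prod_decode a})" for a
    proof -
      obtain k j where a: "prod_decode a = (k, j)" by fastforce
      show ?thesis
      proof (cases "k \<noteq> 0 \<and> j = 0")
        case True
        have "gB a = tgt (k-1) (GB k)" using a True unfolding gB_def blk_eq by simp
        moreover have "gen (gB ` {b. prod_decode b < prod_decode a}) = gen (GB k)"
          unfolding a below_eq using True by simp
        ultimately show ?thesis using tgt_out[OF GB_Inf] by simp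
      next
        case False
        show ?thesis by (rule ind2_notin[OF G2core[OF a False] gen_subspace])
      qed
    qed
    show "ind2 (gen (gB ` {b. prod_decode b < prod_decode a})) (gB a)"
      if "is_min_idx {(m,n). prod_decode m \<le> prod_decode n} a \<or>
          is_succ_idx {(m,n). prod_decode m \<le> prod_decode n} a" for a
    proof -
      obtain k j where a: "prod_decode a = (k, j)" by fastforce
      have "\<not> (k \<noteq> 0 \<and> j = 0)" using notmin[of a k] a that by auto
      then show ?thesis by (rule G2core[OF a])
    qed
    show "span (\<Union>a. gen (gB ` {b. prod_decode b \<le> prod_decode a})) = UNIV"
    proof -
      have "C \<subseteq> (\<Union>a. gen (gB ` {b. prod_decode b \<le> prod_decode a}))"
      proof
        fix x assume "x \<in> C"
        then obtain k where k: "x = from_nat_into C k"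
          using from_nat_into_surj[OF C_count] by metis
        define a where "a = prod_encode (Suc k, 0)"
        have Ma: "gB ` {b. prod_decode b \<le> prod_decode a} = GB (Suc k) \<union> {tgt k (GB (Suc k))}"
          unfolding a_def prod_encode_inverse le_eq by (simp add: blk_eq)
        have "x \<in> gen (GB (Suc k) \<union> {tgt k (GB (Suc k))})"
        proof (cases "x \<in> gen (GB (Suc k))")
          case True
          moreover have "gen (GB (Suc k)) \<subseteq> gen (GB (Suc k) \<union> {tgt k (GB (Suc k))})" by (rule gen_mono) blast
          ultimately show ?thesis by blast
        next
          case False
          then have "tgt k (GB (Suc k)) = x" unfolding tgt_def k by simp
          then show ?thesis using gen_sup[of "GB (Suc k) \<union> {tgt k (GB (Suc k))}"] by blast
        qed
        then show "x \<in> (\<Union>a. gen (gB ` {b. prod_decode b \<le> prod_decode a}))"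
          unfolding Ma[symmetric] by blast
      qed
      then have "span C \<subseteq> span (\<Union>a. gen (gB ` {b. prod_decode b \<le> prod_decode a}))" by (rule span_mono)
      then show ?thesis using C_span by auto
    qed
  qed
  then show ?thesis by blast
qed

end

context sctx2 begin

lemma main_good: "\<exists>(r :: nat rel) M. good_stratification scale u r M"
proof (cases "\<exists>c F. finite F \<and> range (\<lambda>x. Tl c (Tl c x)) \<subseteq> span F")
  case True
  then obtain c F where cF: "finite F" "range (\<lambda>x. Tl c (Tl c x)) \<subseteq> span F" by blast
  interpret B: caseB scale u C c F by unfold_locales (use cF in auto)
  show ?thesis by (rule B.caseB_good)
next
  case False
  then have "\<And>c F. finite F \<Longrightarrow> \<not> range (\<lambda>x. Tl c (Tl c x)) \<subseteq> span F" by blast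
  then show ?thesis by (rule caseA_good)
qed

end

theorem proposition5:
  fixes scale :: "'a::field \<Rightarrow> 'b::ab_group_add \<Rightarrow> 'b" and u :: "'b \<Rightarrow> 'b"
  assumes "vector_space scale"
    and "\<exists>B. \<not> module.dependent scale B \<and> module.span scale B = UNIV \<and> countable B \<and> infinite B"
    and "Vector_Spaces.linear scale scale u"
    and "\<forall>c. \<not> dominant_eigenvalue scale u c"
    and "\<forall>x. \<exists>p. p \<noteq> 0 \<and> poly_endo scale u p x = 0"
  shows "\<exists>(r :: nat rel) M. good_stratification scale u r M"
proof -
  obtain B where B: "\<not> module.dependent scale B" "module.span scale B = UNIV" "countable B" "infinite B"
    using assms(2) by blast
  have "sctx2 scale u B"
  proof (intro sctx2.intro sctx.intro sctx2_axioms.intro sctx_axioms.intro)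
    show "vector_space scale" by (rule assms(1))
    show "Vector_Spaces.linear scale scale u" by (rule assms(3))
    show "\<not> module.dependent scale B" "module.span scale B = UNIV" "infinite B" "countable B"
      using B by auto
    show "\<forall>c. \<not> dominant_eigenvalue scale u c" by (rule assms(4))
    show "\<forall>x. \<exists>p. p \<noteq> 0 \<and> poly_endo scale u p x = 0" by (rule assms(5))
  qed
  then interpret S: sctx2 scale u B .
  show ?thesis by (rule S.main_good)
qed


end
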